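(* Let $\lambda_0\in(0,\pi)$. Let $\{U_t,t\in\mathbb{Z}\}$ be a zero-mean weakly stationary process with spectral density $f_U$ continuous on $[0,\pi]$ with $\inf_{\lambda\in[0,\pi]}f_U(\lambda)>0$, whose autocovariance $\gamma_U$ and fourth-order cumulants satisfy $$\sum_{h\in\mathbb{Z}}|h||\gamma_U(h)|<\infty,\qquad \sum_{h_1,h_2,h_3\in\mathbb{Z}}(1+|h_1|+|h_2|+|h_3|)\,|\mathrm{cum}(U_0,U_{h_1},U_{h_2},U_{h_3})|<\infty.$$ Let $(\delta_n)\subset(0,1)$ satisfy $\delta_n\sim n^{-\alpha}$ for some $\alpha\in(0,1/3)$. For each $n$, let $X_{t,\delta_n}=A_{\delta_n}(L)^{-1}U_t$ with $A_\delta(z)=1-2(1-\delta)\cos(\lambda_0)z+(1-\delta)^2z^2$, let $\gamma_{\delta_n}(0)=\mathrm{Var}(X_{t,\delta_n})$, and based on the observations $X_{1,\delta_n},\dots,X_{n,\delta_n}$ let $$\widehat\gamma_{\delta_n}(0)=\frac{2\pi}{n}\sum_{j\in\mathcal{G}(n)}I_{n,\delta_n}(\lambda_{j,n}),\qquad I_{n,\delta_n}(\lambda)=\frac{1}{2\pi n}\Big|\sum_{t=1}^nX_{t,\delta_n}e^{-i\lambda t}\Big|^2,$$ with $\lambda_{j,n}=2\pi j/n$, $\mathcal{G}(n)=\{-N,\dots,-1,1,\dots,N\}$, $N=\lfloor n/2\rfloor$. Then $\widehat\gamma_{\delta_n}(0)/\gamma_{\delta_n}(0)\xrightarrow{P}1$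 as $n\to\infty$.
   Context: $L$ is the lag operator and $A_\delta(L)^{-1}$ the causal inverse filter: $X_{t,\delta}=\sum_{j\ge0}b_{j,\delta}U_{t-j}$ with $1/A_\delta(z)=\sum_{j\ge0}b_{j,\delta}z^j$; its spectral density is $f_\delta(\lambda)=|1-(1-\delta)e^{-i(\lambda-\lambda_0)}|^{-2}|1-(1-\delta)e^{-i(\lambda+\lambda_0)}|^{-2}f_U(\lambda)$. $\delta_n\sim n^{-\alpha}$ means $\delta_n$ is of exact order $n^{-\alpha}$ as $n\to\infty$. *)

theory Defs
  imports "HOL-Probability.Probability"
    "HOL-Computational_Algebra.Formal_Power_Series"
    "HOL-Library.Landau_Symbols"
begin

definition A_fps :: "real \<Rightarrow> real \<Rightarrow> real fps" where
  "A_fps lam0 \<delta> = 1 - fps_const (2 * (1 - \<delta>) * cos lam0) * fps_X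
                    + fps_const ((1 - \<delta>)^2) * fps_X ^ 2"

definition inv_filter_coeff :: "real \<Rightarrow> real \<Rightarrow> nat \<Rightarrow> real" where
  "inv_filter_coeff lam0 \<delta> j = fps_nth (inverse (A_fps lam0 \<delta>)) j"

text \<open>X_{t,delta} = A_delta(L)^{-1} U_t = sum_{j>=0} b_j U_{t-j}.\<close>
definition filtered :: "real \<Rightarrow> real \<Rightarrow> (int \<Rightarrow> 'a \<Rightarrow> real) \<Rightarrow> int \<Rightarrow> 'a \<Rightarrow> real" where
  "filtered lam0 \<delta> U t \<omega> = (\<Sum>j. inv_filter_coeff lam0 \<delta> j * U (t - int j) \<omega>)"

definition cum4 :: "'a measure \<Rightarrow> ('a \<Rightarrow> real) \<Rightarrow> ('a \<Rightarrow> real) \<Rightarrow> ('a \<Rightarrow> real) \<Rightarrow> ('a \<Rightarrow> real) \<Rightarrow> real" where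
  "cum4 M X1 X2 X3 X4 =
     (let Y1 = (\<lambda>\<omega>. X1 \<omega> - integral\<^sup>L M X1);
          Y2 = (\<lambda>\<omega>. X2 \<omega> - integral\<^sup>L M X2);
          Y3 = (\<lambda>\<omega>. X3 \<omega> - integral\<^sup>L M X3);
          Y4 = (\<lambda>\<omega>. X4 \<omega> - integral\<^sup>L M X4)
      in integral\<^sup>L M (\<lambda>\<omega>. Y1 \<omega> * Y2 \<omega> * Y3 \<omega> * Y4 \<omega>)
         - integral\<^sup>L M (\<lambda>\<omega>. Y1 \<omega> * Y2 \<omega>) * integral\<^sup>L M (\<lambda>\<omega>. Y3 \<omega> * Y4 \<omega>)
         - integral\<^sup>L M (\<lambda>\<omega>. Y1 \<omega> * Y3 \<omega>) * integral\<^sup>L M (\<lambda>\<omega>. Y2 \<omega> * Y4 \<omega>)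
         - integral\<^sup>L M (\<lambda>\<omega>. Y1 \<omega> * Y4 \<omega>) * integral\<^sup>L M (\<lambda>\<omega>. Y2 \<omega> * Y3 \<omega>))"

definition periodogram :: "nat \<Rightarrow> (int \<Rightarrow> real) \<Rightarrow> real \<Rightarrow> real" where
  "periodogram n x lam = 1 / (2 * pi * real n) *
     (cmod (\<Sum>t\<in>{1..int n}. complex_of_real (x t) * exp (- (\<i> * complex_of_real (lam * real_of_int t)))))^2"

definition freq_set :: "nat \<Rightarrow> int set" where
  "freq_set n = {- int (n div 2) .. int (n div 2)} - {0}"

definition gamma_hat :: "nat \<Rightarrow> (int \<Rightarrow> real) \<Rightarrow> real" where
  "gamma_hat n x = 2 * pi / real n *
     (\<Sum>j\<in>freq_set n. periodogram n x (2 * pi * real_of_int j / real n))"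

end

theory Submission
  imports Defs
begin

lemma A_fps_nth:
  "fps_nth (A_fps lam0 d) n = (if n = 0 then 1 else if n = 1 then - 2 * (1 - d) * cos lam0
      else if n = 2 then (1 - d)^2 else 0)"
  by (auto simp: A_fps_def fps_X_power_iff algebra_simps)

lemma inv_coeff_rec:
  fixes lam0 d :: real
  defines "b \<equiv> inv_filter_coeff lam0 d"
  shows "b 0 = 1" "b 1 = 2 * (1 - d) * cos lam0"
    "b (Suc (Suc n)) = 2 * (1 - d) * cos lam0 * b (Suc n) - (1 - d)^2 * b n"
proof -
  let ?A = "A_fps lam0 d"
  have A0: "fps_nth ?A 0 \<noteq> 0" by (simp add: A_fps_nth)
  have one: "inverse ?A * ?A = 1" using A0 by (simp add: inverse_mult_eq_1)
  have key: "(\<Sum>i=0..m. b i * fps_nth ?A (m - i)) = (if m = 0 then 1 else 0)" for m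
    using arg_cong[OF one, of "\<lambda>f. fps_nth f m"] unfolding fps_mult_nth b_def inv_filter_coeff_def
    by simp
  show "b 0 = 1" using key[of 0] by (simp add: A_fps_nth)
  then show "b 1 = 2 * (1 - d) * cos lam0" using key[of 1] by (simp add: A_fps_nth algebra_simps)
  have "(\<Sum>i=0..Suc (Suc n). b i * fps_nth ?A (Suc (Suc n) - i))
      = b (Suc (Suc n)) - 2 * (1 - d) * cos lam0 * b (Suc n) + (1 - d)^2 * b n"
  proof -
    have "(\<Sum>i=0..Suc (Suc n). b i * fps_nth ?A (Suc (Suc n) - i))
        = (\<Sum>i\<in>{n, Suc n, Suc (Suc n)}. b i * fps_nth ?A (Suc (Suc n) - i))"
      by (rule sum.mono_neutral_right) (auto simp: A_fps_nth)
    also have "\<dots> = b (Suc (Suc n)) - 2 * (1 - d) * cos lam0 * b (Suc n) + (1 - d)^2 * b n"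
      by (simp add: A_fps_nth Suc_diff_le) (simp add: algebra_simps)
    finally show ?thesis .
  qed
  then show "b (Suc (Suc n)) = 2 * (1 - d) * cos lam0 * b (Suc n) - (1 - d)^2 * b n"
    using key[of "Suc (Suc n)"] by simp
qed

lemma alg: "2 * r * c * (r^(Suc m) * x / s) - r^2 * (r^m * y / s) = r^(m+2) * (2*c*x - y) / (s::real)"
  by (cases "s = 0") (simp_all add: field_simps power2_eq_square)

lemma inv_coeff_closed:
  fixes lam0 d :: real
  assumes "sin lam0 \<noteq> 0"
  shows "inv_filter_coeff lam0 d j = (1 - d)^j * sin (real (j+1) * lam0) / sin lam0"
proof (induction j rule: nat_less_induct)
  case (1 j)
  show ?case
  proof (cases j)
    case 0 then show ?thesis using assms inv_coeff_rec(1)[of lam0 d] by simp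
  next
    case (Suc k)
    show ?thesis
    proof (cases k)
      case 0 then show ?thesis using assms Suc inv_coeff_rec(2)[of lam0 d] by (simp add: sin_double)
    next
      case (Suc m)
      have IH1: "inv_filter_coeff lam0 d (Suc m) = (1 - d)^(Suc m) * sin (real (m+2) * lam0) / sin lam0"
        using 1 \<open>j = Suc k\<close> Suc by (auto simp: add.commute)
      have IH0: "inv_filter_coeff lam0 d m = (1 - d)^m * sin (real (m+1) * lam0) / sin lam0"
        using 1 \<open>j = Suc k\<close> Suc by auto
      have trig: "sin (real (m+3) * lam0) = 2 * cos lam0 * sin (real (m+2) * lam0) - sin (real (m+1) * lam0)"
      proof -
        have a: "real (m+3) * lam0 = real (m+2) * lam0 + lam0" "real (m+1) * lam0 = real (m+2) * lam0 - lam0"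
          by (simp_all add: algebra_simps)
        show ?thesis unfolding a sin_add sin_diff by simp
      qed
      have "inv_filter_coeff lam0 d j = 2 * (1 - d) * cos lam0 * inv_filter_coeff lam0 d (Suc m)
              - (1 - d)^2 * inv_filter_coeff lam0 d m"
        using inv_coeff_rec(3)[of lam0 d m] \<open>j = Suc k\<close> Suc by simp
      also have "\<dots> = (1 - d)^(m+2) * (2 * cos lam0 * sin (real (m+2) * lam0) - sin (real (m+1) * lam0)) / sin lam0"
        unfolding IH1 IH0 by (rule alg)
      also have "\<dots> = (1 - d)^j * sin (real (j+1) * lam0) / sin lam0"
        using trig \<open>j = Suc k\<close> Suc by (simp add: add.commute)
      finally show ?thesis .
    qed
  qed
qed

lemma sum_int_shift:
  fixes f :: "int \<Rightarrow> 'b::comm_monoid_add" and N :: nat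
  shows "(\<Sum>j\<in>{- int N..int N}. f j) = (\<Sum>m\<in>{0..2*N}. f (int m - int N))"
  by (rule sum.reindex_bij_witness[where j="\<lambda>j. nat (j + int N)" and i="\<lambda>m. int m - int N"]) auto

lemma root_sum:
  fixes n :: nat and k :: int
  assumes n: "n \<ge> 1" and k: "\<bar>k\<bar> < int n"
  shows "(\<Sum>j\<in>freq_set n. exp (- (\<i> * complex_of_real (2 * pi * real_of_int j / real n * real_of_int k))))
     = (if k = 0 then of_nat n - 1 else -1) + (if even n then (-1) ^ nat \<bar>k\<bar> else 0)"
proof -
  define N where "N = n div 2"
  define \<theta> where "\<theta> = - (2 * pi * real_of_int k / real n)"
  define w where "w = exp (\<i> * complex_of_real \<theta>)"
  define f where "f = (\<lambda>j::int. exp (- (\<i> * complex_of_real (2 * pi * real_of_int j / real n * real_of_int k))))"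
  have fj: "f j = exp (\<i> * complex_of_real (real_of_int j * \<theta>))" for j
    unfolding f_def \<theta>_def by (simp add: algebra_simps)
  have fm: "f (int m - int N) = exp (- \<i> * complex_of_real (real N * \<theta>)) * w ^ m" for m
  proof -
    have "f (int m - int N) = exp (\<i> * complex_of_real (real m * \<theta>) + (- \<i> * complex_of_real (real N * \<theta>)))"
      unfolding fj by (simp add: algebra_simps)
    also have "\<dots> = exp (- \<i> * complex_of_real (real N * \<theta>)) * w ^ m"
      unfolding exp_add w_def exp_of_nat_mult[symmetric] by (simp add: algebra_simps)
    finally show ?thesis .
  qed
  have fs: "freq_set n = {- int N..int N} - {0}" unfolding freq_set_def N_def by simp
  have sum_all: "(\<Sum>j\<in>{- int N..int N}. f j) = exp (- \<i> * complex_of_real (real N * \<theta>)) * (\<Sum>m\<in>{0..2*N}. w ^ m)"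
    unfolding sum_int_shift fm by (simp add: sum_distrib_left)
  have wn: "w ^ n = 1"
  proof -
    have "w ^ n = exp (of_nat n * (\<i> * complex_of_real \<theta>))" unfolding w_def exp_of_nat_mult by simp
    also have "of_nat n * (\<i> * complex_of_real \<theta>) = \<i> * complex_of_real (- 2 * pi * real_of_int k)"
      using n unfolding \<theta>_def by (simp add: field_simps)
    also have "exp \<dots> = 1" by (simp add: exp_eq_1) (metis mult.commute mult.left_commute mult_minus_left of_int_minus)
    finally show ?thesis .
  qed
  have geo: "(\<Sum>m<n. w ^ m) = (if k = 0 then of_nat n else 0)"
  proof (cases "k = 0")
    case True
    then have "w = 1" unfolding w_def \<theta>_def by simp
    then show ?thesis using True by simp
  next
    case False
    have "w \<noteq> 1"
    proof
      assume "w = 1"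
      then obtain m :: int where m: "\<theta> = of_int (2 * m) * pi" unfolding w_def exp_eq_1 by auto
      then have "- (2 * pi * real_of_int k / real n) = 2 * pi * real_of_int m" unfolding \<theta>_def by simp
      then have "pi * (- real_of_int k) = pi * (real_of_int m * real n)" using n by (simp add: field_simps)
      then have "- real_of_int k = real_of_int m * real n" using pi_neq_zero mult_cancel_left by blast
      then have "- k = m * int n" by (metis of_int_eq_iff of_int_minus of_int_mult of_int_of_nat_eq)
      then have ak: "\<bar>k\<bar> = \<bar>m\<bar> * int n" by (metis abs_minus_cancel abs_mult abs_of_nat)
      have "m \<noteq> 0" using False \<open>- k = m * int n\<close> by auto
      then have "1 \<le> \<bar>m\<bar>" by simp
      then have "int n \<le> \<bar>m\<bar> * int n" using mult_right_mono[of 1 "\<bar>m\<bar>" "int n"] by simp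
      then show False using k ak by simp
    qed
    then show ?thesis using False wn by (simp add: sum_gp_strict)
  qed
  show ?thesis
  proof (cases "even n")
    case True
    then have n2: "2 * N = n" unfolding N_def by simp
    have "(\<Sum>m\<in>{0..2*N}. w ^ m) = (\<Sum>m<n. w ^ m) + w ^ n"
      unfolding n2 by (simp add: atLeast0AtMost lessThan_Suc_atMost[symmetric])
    also have "\<dots> = (if k = 0 then of_nat n else 0) + 1" using geo wn by simp
    finally have s: "(\<Sum>m\<in>{0..2*N}. w ^ m) = (if k = 0 then of_nat n else 0) + 1" .
    have e: "exp (- \<i> * complex_of_real (real N * \<theta>)) = (-1) ^ nat \<bar>k\<bar>"
    proof -
      have "real N * \<theta> = - (pi * real_of_int k)" unfolding \<theta>_def using n2[symmetric] n
        by (simp add: field_simps)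
      then have "exp (- \<i> * complex_of_real (real N * \<theta>)) = exp (\<i> * complex_of_real (pi * real_of_int k))"
        by simp
      also have "\<dots> = cis (pi * real_of_int k)" by (simp add: cis_conv_exp)
      also have "\<dots> = (-1) ^ nat \<bar>k\<bar>"
      proof -
        have "cis (pi * real_of_int k) = complex_of_real (cos (pi * real_of_int k))"
          by (simp add: cis.ctr complex_eq_iff)
        also have "cos (pi * real_of_int k) = cos (pi * real (nat \<bar>k\<bar>))"
          by (cases "k \<ge> 0") (auto simp: mult.commute)
        also have "\<dots> = (-1) ^ nat \<bar>k\<bar>" by (simp only: mult.commute[of pi] cos_npi)
        finally show ?thesis by simp
      qed
      finally show ?thesis .
    qed
    have "(\<Sum>j\<in>freq_set n. f j) = (\<Sum>j\<in>{- int N..int N}. f j) - f 0"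
      unfolding fs by (simp add: sum_diff1)
    also have "f 0 = 1" unfolding f_def by simp
    also note sum_all
    also note s
    also note e
    finally have "(\<Sum>j\<in>freq_set n. f j) = (-1) ^ nat \<bar>k\<bar> * ((if k = 0 then of_nat n else 0) + 1) - 1" .
    then show ?thesis using True unfolding f_def by (auto simp: algebra_simps)
  next
    case False
    then have n2: "2 * N + 1 = n" unfolding N_def by presburger
    have "(\<Sum>m\<in>{0..2*N}. w ^ m) = (\<Sum>m<n. w ^ m)"
      unfolding n2[symmetric] by (simp add: atLeast0AtMost lessThan_Suc_atMost[symmetric])
    also note geo
    finally have s: "(\<Sum>m\<in>{0..2*N}. w ^ m) = (if k = 0 then of_nat n else 0)" .
    have "(\<Sum>j\<in>freq_set n. f j) = (\<Sum>j\<in>{- int N..int N}. f j) - f 0"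
      unfolding fs by (simp add: sum_diff1)
    also have "f 0 = 1" unfolding f_def by simp
    also note sum_all
    also note s
    finally have "(\<Sum>j\<in>freq_set n. f j) = exp (- \<i> * complex_of_real (real N * \<theta>)) * (if k = 0 then of_nat n else 0) - 1" .
    then show ?thesis using False unfolding f_def \<theta>_def by auto
  qed
qed

lemma neg1_pow_nat:
  fixes a b :: nat
  shows "(-1::real) ^ (if b \<le> a then a - b else b - a) = (-1) ^ a * (-1) ^ b"
proof -
  have "even (if b \<le> a then a - b else b - a) \<longleftrightarrow> even (a + b)" by presburger
  then show ?thesis unfolding power_add[symmetric] by (simp add: minus_one_power_iff)
qed

lemma neg1_pow_diff:
  fixes s t :: int assumes "0 \<le> s" "0 \<le> t"
  shows "(-1::real) ^ nat \<bar>s - t\<bar> = (-1) ^ nat s * (-1) ^ nat t"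
proof -
  have "nat \<bar>s - t\<bar> = (if nat t \<le> nat s then nat s - nat t else nat t - nat s)" using assms by auto
  then show ?thesis using neg1_pow_nat by simp
qed

lemma quad_expand:
  fixes x :: "int \<Rightarrow> real" and I :: "int set" and p :: "int \<Rightarrow> real" and c :: real and e :: bool
  assumes "finite I"
  shows "(\<Sum>s\<in>I. \<Sum>t\<in>I. x s * x t * (c * (if s = t then 1 else 0) - 1 + (if e then p s * p t else 0)))
     = c * (\<Sum>s\<in>I. x s ^ 2) - (\<Sum>s\<in>I. x s)^2 + (if e then (\<Sum>s\<in>I. p s * x s)^2 else 0)"
proof -
  have "(\<Sum>s\<in>I. \<Sum>t\<in>I. x s * x t * (c * (if s = t then 1 else 0) - 1 + (if e then p s * p t else 0)))
     = (\<Sum>s\<in>I. \<Sum>t\<in>I. c * (if s = t then x s * x t else 0)) - (\<Sum>s\<in>I. \<Sum>t\<in>I. x s * x t)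
       + (\<Sum>s\<in>I. \<Sum>t\<in>I. (if e then (p s * x s) * (p t * x t) else 0))"
  proof -
    have "x s * x t * (c * (if s = t then 1 else 0) - 1 + (if e then p s * p t else 0))
      = c * (if s = t then x s * x t else 0) - x s * x t + (if e then (p s * x s) * (p t * x t) else 0)" for s t
      by (auto simp: algebra_simps)
    then show ?thesis by (simp add: sum.distrib sum_subtractf)
  qed
  also have "(\<Sum>s\<in>I. \<Sum>t\<in>I. c * (if s = t then x s * x t else 0)) = c * (\<Sum>s\<in>I. x s ^ 2)"
    using assms by (simp add: sum_distrib_left[symmetric] power2_eq_square)
  also have "(\<Sum>s\<in>I. \<Sum>t\<in>I. x s * x t) = (\<Sum>s\<in>I. x s)^2"
    by (simp add: power2_eq_square sum_product)
  also have "(\<Sum>s\<in>I. \<Sum>t\<in>I. (if e then (p s * x s) * (p t * x t) else 0)) = (if e then (\<Sum>s\<in>I. p s * x s)^2 else 0)"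
    by (simp add: power2_eq_square sum_product)
  finally show ?thesis .
qed

lemma gamma_hat_eq:
  fixes x :: "int \<Rightarrow> real" and n :: nat
  assumes n: "n \<ge> 1"
  shows "gamma_hat n x = (\<Sum>t\<in>{1..int n}. x t ^ 2) / real n - ((\<Sum>t\<in>{1..int n}. x t) / real n)^2
     + (if even n then ((\<Sum>t\<in>{1..int n}. (-1) ^ nat t * x t) / real n)^2 else 0)"
proof -
  define I where "I = {1..int n}"
  define z where "z = (\<lambda>j::int. \<Sum>t\<in>I. complex_of_real (x t) * exp (- (\<i> * complex_of_real (2 * pi * real_of_int j / real n * real_of_int t))))"
  define cr where "cr = (\<lambda>k::int. (if k = 0 then real n - 1 else -1) + (if even n then (-1) ^ nat \<bar>k\<bar> else 0))"
  have zz: "z j * cnj (z j) = (\<Sum>s\<in>I. \<Sum>t\<in>I. complex_of_real (x s * x t) *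
        exp (- (\<i> * complex_of_real (2 * pi * real_of_int j / real n * real_of_int (s - t)))))" for j
  proof -
    have "z j * cnj (z j) = (\<Sum>s\<in>I. \<Sum>t\<in>I. (complex_of_real (x s) * exp (- (\<i> * complex_of_real (2 * pi * real_of_int j / real n * real_of_int s))))
        * cnj (complex_of_real (x t) * exp (- (\<i> * complex_of_real (2 * pi * real_of_int j / real n * real_of_int t)))))"
      unfolding z_def by (simp add: sum_product cnj_sum)
    also have "\<dots> = (\<Sum>s\<in>I. \<Sum>t\<in>I. complex_of_real (x s * x t) *
        exp (- (\<i> * complex_of_real (2 * pi * real_of_int j / real n * real_of_int (s - t)))))"
    proof (intro sum.cong refl)
      fix s t
      have "exp (- (\<i> * complex_of_real (2 * pi * real_of_int j / real n * real_of_int s))) *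
            cnj (exp (- (\<i> * complex_of_real (2 * pi * real_of_int j / real n * real_of_int t))))
          = exp (- (\<i> * complex_of_real (2 * pi * real_of_int j / real n * real_of_int s)) +
                 (\<i> * complex_of_real (2 * pi * real_of_int j / real n * real_of_int t)))"
        by (simp add: exp_cnj flip: exp_add)
      also have "\<dots> = exp (- (\<i> * complex_of_real (2 * pi * real_of_int j / real n * real_of_int (s - t))))"
        using n by (intro arg_cong[where f=exp]) (simp add: field_simps)
      finally show "(complex_of_real (x s) * exp (- (\<i> * complex_of_real (2 * pi * real_of_int j / real n * real_of_int s))))
        * cnj (complex_of_real (x t) * exp (- (\<i> * complex_of_real (2 * pi * real_of_int j / real n * real_of_int t))))
        = complex_of_real (x s * x t) * exp (- (\<i> * complex_of_real (2 * pi * real_of_int j / real n * real_of_int (s - t))))"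
        by (simp add: mult_ac)
    qed
    finally show ?thesis .
  qed
  have key: "complex_of_real (\<Sum>j\<in>freq_set n. (cmod (z j))^2) = complex_of_real (\<Sum>s\<in>I. \<Sum>t\<in>I. x s * x t * cr (s - t))"
  proof -
    have "complex_of_real (\<Sum>j\<in>freq_set n. (cmod (z j))^2) = (\<Sum>j\<in>freq_set n. z j * cnj (z j))"
      by (simp add: complex_norm_square flip: of_real_power)
    also have "\<dots> = (\<Sum>s\<in>I. \<Sum>t\<in>I. complex_of_real (x s * x t) * (\<Sum>j\<in>freq_set n.
        exp (- (\<i> * complex_of_real (2 * pi * real_of_int j / real n * real_of_int (s - t))))))"
      unfolding zz by (simp add: sum_distrib_left sum.swap[of _ "freq_set n"])
    also have "\<dots> = (\<Sum>s\<in>I. \<Sum>t\<in>I. complex_of_real (x s * x t * cr (s - t)))"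
    proof (intro sum.cong refl)
      fix s t assume "s \<in> I" "t \<in> I"
      then have "\<bar>s - t\<bar> < int n" unfolding I_def by auto
      then show "complex_of_real (x s * x t) * (\<Sum>j\<in>freq_set n.
        exp (- (\<i> * complex_of_real (2 * pi * real_of_int j / real n * real_of_int (s - t)))))
        = complex_of_real (x s * x t * cr (s - t))"
        by (subst root_sum[OF n]) (auto simp: cr_def)
    qed
    also have "\<dots> = complex_of_real (\<Sum>s\<in>I. \<Sum>t\<in>I. x s * x t * cr (s - t))" by simp
    finally show ?thesis .
  qed
  then have key': "(\<Sum>j\<in>freq_set n. (cmod (z j))^2) = (\<Sum>s\<in>I. \<Sum>t\<in>I. x s * x t * cr (s - t))"
    using of_real_eq_iff by blast
  have cr_eq: "cr (s - t) = real n * (if s = t then 1 else 0) - 1 + (if even n then (-1) ^ nat s * (-1) ^ nat t else 0)"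
    if "s \<in> I" "t \<in> I" for s t
    using that neg1_pow_diff[of s t] unfolding cr_def I_def by auto
  have "(\<Sum>s\<in>I. \<Sum>t\<in>I. x s * x t * cr (s - t))
      = (\<Sum>s\<in>I. \<Sum>t\<in>I. x s * x t * (real n * (if s = t then 1 else 0) - 1 + (if even n then (-1) ^ nat s * (-1) ^ nat t else 0)))"
    by (intro sum.cong refl) (simp add: cr_eq)
  also have "\<dots> = real n * (\<Sum>s\<in>I. x s ^ 2) - (\<Sum>s\<in>I. x s)^2 + (if even n then (\<Sum>s\<in>I. (-1) ^ nat s * x s)^2 else 0)"
    by (rule quad_expand) (simp add: I_def)
  finally have Q: "(\<Sum>j\<in>freq_set n. (cmod (z j))^2) = real n * (\<Sum>s\<in>I. x s ^ 2) - (\<Sum>s\<in>I. x s)^2 + (if even n then (\<Sum>s\<in>I. (-1) ^ nat s * x s)^2 else 0)"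
    using key' by simp
  have "gamma_hat n x = (\<Sum>j\<in>freq_set n. (cmod (z j))^2) / (real n)^2"
    unfolding gamma_hat_def periodogram_def z_def I_def
    by (simp add: sum_distrib_left sum_divide_distrib power2_eq_square field_simps)
  also note Q
  finally show ?thesis using n unfolding I_def by (simp add: field_simps power2_eq_square)
qed

lemma abs_mult_le_sq: "\<bar>x * y\<bar> \<le> x^2 + (y::real)^2"
proof -
  have "2 * \<bar>x\<bar> * \<bar>y\<bar> \<le> \<bar>x\<bar>^2 + \<bar>y\<bar>^2" by (rule sum_squares_bound)
  moreover have "0 \<le> \<bar>x\<bar> * \<bar>y\<bar>" by simp
  moreover have "\<bar>x * y\<bar> = \<bar>x\<bar> * \<bar>y\<bar>" by (simp add: abs_mult)
  moreover have "\<bar>x\<bar>^2 = x^2" "\<bar>y\<bar>^2 = y^2" by simp_all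
  ultimately show ?thesis by linarith
qed

lemma sq_le_4: "(x::real)^2 \<le> 1 + x^4"
proof -
  have "2 * 1 * x^2 \<le> 1^2 + (x^2)^2" by (rule sum_squares_bound)
  then have "2 * x^2 \<le> 1 + x^4" by (simp add: power_mult[symmetric])
  moreover have "0 \<le> x^2" by simp
  ultimately show ?thesis by linarith
qed

lemma amgm4: "\<bar>x * y * z * w\<bar> \<le> 2 * (x^4 + y^4 + z^4 + (w::real)^4)"
proof -
  have a: "\<bar>x * y\<bar> \<le> x^2 + y^2" "\<bar>z * w\<bar> \<le> z^2 + w^2" by (rule abs_mult_le_sq)+
  have "\<bar>x * y * z * w\<bar> = \<bar>x * y\<bar> * \<bar>z * w\<bar>" by (simp add: abs_mult)
  also have "\<dots> \<le> (x^2 + y^2) * (z^2 + w^2)" using a by (intro mult_mono) auto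
  also have "\<dots> \<le> (x^2 + y^2)^2 + (z^2 + w^2)^2"
    using abs_mult_le_sq[of "x^2+y^2" "z^2+w^2"] by simp
  also have "\<dots> \<le> 2 * (x^4 + y^4 + z^4 + w^4)"
  proof -
    have "2 * x^2 * y^2 \<le> (x^2)^2 + (y^2)^2" "2 * z^2 * w^2 \<le> (z^2)^2 + (w^2)^2" by (rule sum_squares_bound)+
    then show ?thesis by (simp add: power2_sum power_mult[symmetric])
  qed
  finally show ?thesis .
qed

locale Uproc = prob_space M for M :: "'a measure" +
  fixes U :: "int \<Rightarrow> 'a \<Rightarrow> real" and gU :: "int \<Rightarrow> real"
  assumes measU[measurable]: "\<And>t. U t \<in> borel_measurable M"
    and mom4: "\<And>t. integrable M (\<lambda>\<omega>. (U t \<omega>) ^ 4)"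
    and mean0: "\<And>t. integral\<^sup>L M (U t) = 0"
    and cov: "\<And>t h. integral\<^sup>L M (\<lambda>\<omega>. U t \<omega> * U (t + h) \<omega>) = gU h"
    and cum_stat: "\<And>t h1 h2 h3. cum4 M (U t) (U (t + h1)) (U (t + h2)) (U (t + h3))
                                 = cum4 M (U 0) (U h1) (U h2) (U h3)"
begin

definition kap :: "int \<Rightarrow> int \<Rightarrow> int \<Rightarrow> real" where
  "kap h1 h2 h3 = cum4 M (U 0) (U h1) (U h2) (U h3)"

lemma int4: "integrable M (\<lambda>\<omega>. U a \<omega> * U b \<omega> * U c \<omega> * U d \<omega>)"
proof (rule Bochner_Integration.integrable_bound)
  show "integrable M (\<lambda>\<omega>. 2 * (U a \<omega> ^ 4 + U b \<omega> ^ 4 + U c \<omega> ^ 4 + U d \<omega> ^ 4))"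
    using mom4 by auto
  show "AE \<omega> in M. norm (U a \<omega> * U b \<omega> * U c \<omega> * U d \<omega>) \<le> norm (2 * (U a \<omega> ^ 4 + U b \<omega> ^ 4 + U c \<omega> ^ 4 + U d \<omega> ^ 4))"
  proof (intro AE_I2)
    fix \<omega>
    have "0 \<le> 2 * (U a \<omega> ^ 4 + U b \<omega> ^ 4 + U c \<omega> ^ 4 + U d \<omega> ^ 4)" by simp
    then show "norm (U a \<omega> * U b \<omega> * U c \<omega> * U d \<omega>) \<le> norm (2 * (U a \<omega> ^ 4 + U b \<omega> ^ 4 + U c \<omega> ^ 4 + U d \<omega> ^ 4))"
      using amgm4[of "U a \<omega>" "U b \<omega>" "U c \<omega>" "U d \<omega>"] by (simp only: real_norm_def abs_of_nonneg)
  qed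
qed measurable

lemma int_sq: "integrable M (\<lambda>\<omega>. (U a \<omega>)^2)"
proof (rule Bochner_Integration.integrable_bound)
  show "integrable M (\<lambda>\<omega>. 1 + U a \<omega> ^ 4)" using mom4 by auto
  show "AE \<omega> in M. norm ((U a \<omega>)^2) \<le> norm (1 + U a \<omega> ^ 4)"
  proof (intro AE_I2)
    fix \<omega>
    have "0 \<le> 1 + U a \<omega> ^ 4" by simp
    then show "norm ((U a \<omega>)^2) \<le> norm (1 + U a \<omega> ^ 4)"
      using sq_le_4[of "U a \<omega>"] by (simp only: real_norm_def abs_of_nonneg zero_le_power2)
  qed
qed measurable

lemma int2: "integrable M (\<lambda>\<omega>. U a \<omega> * U b \<omega>)"
proof (rule Bochner_Integration.integrable_bound)
  show "integrable M (\<lambda>\<omega>. (U a \<omega>)^2 + (U b \<omega>)^2)" using int_sq by auto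
  show "AE \<omega> in M. norm (U a \<omega> * U b \<omega>) \<le> norm ((U a \<omega>)^2 + (U b \<omega>)^2)"
  proof (intro AE_I2)
    fix \<omega>
    have "0 \<le> (U a \<omega>)^2 + (U b \<omega>)^2" by simp
    then show "norm (U a \<omega> * U b \<omega>) \<le> norm ((U a \<omega>)^2 + (U b \<omega>)^2)"
      using abs_mult_le_sq[of "U a \<omega>" "U b \<omega>"] by (simp only: real_norm_def abs_of_nonneg)
  qed
qed measurable

lemma int1: "integrable M (U a)"
proof (rule Bochner_Integration.integrable_bound)
  show "integrable M (\<lambda>\<omega>. 1 + (U a \<omega>)^2)" using int_sq by auto
  show "AE \<omega> in M. norm (U a \<omega>) \<le> norm (1 + (U a \<omega>)^2)"
  proof (intro AE_I2)
    fix \<omega>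
    have "0 \<le> 1 + (U a \<omega>)^2" by simp
    moreover have "\<bar>U a \<omega>\<bar> \<le> 1 + (U a \<omega>)^2" using abs_mult_le_sq[of "U a \<omega>" 1] by simp
    ultimately show "norm (U a \<omega>) \<le> norm (1 + (U a \<omega>)^2)" by simp
  qed
qed measurable

lemma E2: "integral\<^sup>L M (\<lambda>\<omega>. U a \<omega> * U b \<omega>) = gU (b - a)"
  using cov[of a "b - a"] by simp

lemma E4: "integral\<^sup>L M (\<lambda>\<omega>. U a \<omega> * U b \<omega> * U c \<omega> * U d \<omega>)
   = kap (b - a) (c - a) (d - a) + gU (b - a) * gU (d - c) + gU (c - a) * gU (d - b) + gU (d - a) * gU (c - b)"
proof -
  have "kap (b - a) (c - a) (d - a) = cum4 M (U a) (U b) (U c) (U d)"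
    unfolding kap_def using cum_stat[of a "b - a" "c - a" "d - a", symmetric] by simp
  also have "\<dots> = integral\<^sup>L M (\<lambda>\<omega>. U a \<omega> * U b \<omega> * U c \<omega> * U d \<omega>)
      - gU (b - a) * gU (d - c) - gU (c - a) * gU (d - b) - gU (d - a) * gU (c - b)"
    unfolding cum4_def Let_def mean0 by (simp add: E2)
  finally show ?thesis by simp
qed

end

lemma sum4_12: "(\<Sum>i\<in>A. \<Sum>j\<in>A. \<Sum>k\<in>A. \<Sum>l\<in>A. (f i j * g k l :: real)) = (\<Sum>i\<in>A. \<Sum>j\<in>A. f i j) * (\<Sum>k\<in>A. \<Sum>l\<in>A. g k l)"
proof -
  have "(\<Sum>i\<in>A. \<Sum>j\<in>A. \<Sum>k\<in>A. \<Sum>l\<in>A. f i j * g k l) = (\<Sum>i\<in>A. \<Sum>k\<in>A. \<Sum>j\<in>A. \<Sum>l\<in>A. f i j * g k l)"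
    by (rule sum.cong[OF refl], rule sum.swap)
  then show ?thesis unfolding sum_product .
qed

lemma sum4_13: "(\<Sum>i\<in>A. \<Sum>j\<in>A. \<Sum>k\<in>A. \<Sum>l\<in>A. (f i k * g j l :: real)) = (\<Sum>i\<in>A. \<Sum>k\<in>A. f i k) * (\<Sum>j\<in>A. \<Sum>l\<in>A. g j l)"
  unfolding sum_product ..

lemma sum4_14: "(\<Sum>i\<in>A. \<Sum>j\<in>A. \<Sum>k\<in>A. \<Sum>l\<in>A. (f i l * g j k :: real)) = (\<Sum>i\<in>A. \<Sum>l\<in>A. f i l) * (\<Sum>j\<in>A. \<Sum>k\<in>A. g j k)"
proof -
  have "(\<Sum>i\<in>A. \<Sum>j\<in>A. \<Sum>k\<in>A. \<Sum>l\<in>A. f i l * g j k) = (\<Sum>i\<in>A. \<Sum>j\<in>A. \<Sum>l\<in>A. \<Sum>k\<in>A. f i l * g j k)"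
    by (rule sum.cong[OF refl], rule sum.cong[OF refl], rule sum.swap)
  then show ?thesis unfolding sum_product .
qed

context Uproc
begin

definition XK :: "(nat \<Rightarrow> real) \<Rightarrow> nat \<Rightarrow> int \<Rightarrow> 'a \<Rightarrow> real" where
  "XK b K t \<omega> = (\<Sum>j<K. b j * U (t - int j) \<omega>)"

definition GK :: "(nat \<Rightarrow> real) \<Rightarrow> nat \<Rightarrow> int \<Rightarrow> int \<Rightarrow> real" where
  "GK b K s t = (\<Sum>i<K. \<Sum>j<K. b i * b j * gU ((t - int j) - (s - int i)))"

definition QK :: "(nat \<Rightarrow> real) \<Rightarrow> nat \<Rightarrow> int \<Rightarrow> int \<Rightarrow> int \<Rightarrow> int \<Rightarrow> real" where
  "QK b K a1 a2 a3 a4 = (\<Sum>i<K. \<Sum>j<K. \<Sum>k<K. \<Sum>l<K. b i * b j * b k * b l *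
      kap ((a2 - int j) - (a1 - int i)) ((a3 - int k) - (a1 - int i)) ((a4 - int l) - (a1 - int i)))"

lemma XK_meas[measurable]: "XK b K t \<in> borel_measurable M"
  unfolding XK_def by measurable

lemma prod2_expand:
  "XK b K a1 \<omega> * XK b K a2 \<omega> =
   (\<Sum>i<K. \<Sum>j<K. (b i * b j) * (U (a1 - int i) \<omega> * U (a2 - int j) \<omega>))"
  unfolding XK_def sum_product by (simp add: mult_ac)

lemma prod4_expand:
  "XK b K a1 \<omega> * XK b K a2 \<omega> * XK b K a3 \<omega> * XK b K a4 \<omega> =
   (\<Sum>i<K. \<Sum>j<K. \<Sum>k<K. \<Sum>l<K. (b i * b j * b k * b l) *
      (U (a1 - int i) \<omega> * U (a2 - int j) \<omega> * U (a3 - int k) \<omega> * U (a4 - int l) \<omega>))"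
proof -
  have "XK b K a1 \<omega> * XK b K a2 \<omega> * XK b K a3 \<omega> * XK b K a4 \<omega> =
    (XK b K a1 \<omega> * XK b K a2 \<omega>) * (XK b K a3 \<omega> * XK b K a4 \<omega>)" by (simp add: mult_ac)
  also have "\<dots> = (\<Sum>i<K. \<Sum>j<K. \<Sum>k<K. \<Sum>l<K. ((b i * b j) * (U (a1 - int i) \<omega> * U (a2 - int j) \<omega>)) *
      ((b k * b l) * (U (a3 - int k) \<omega> * U (a4 - int l) \<omega>)))"
    unfolding prod2_expand sum4_12 ..
  also have "\<dots> = (\<Sum>i<K. \<Sum>j<K. \<Sum>k<K. \<Sum>l<K. (b i * b j * b k * b l) *
      (U (a1 - int i) \<omega> * U (a2 - int j) \<omega> * U (a3 - int k) \<omega> * U (a4 - int l) \<omega>))"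
    by (simp add: mult_ac)
  finally show ?thesis .
qed

lemma int_XK4: "integrable M (\<lambda>\<omega>. XK b K a1 \<omega> * XK b K a2 \<omega> * XK b K a3 \<omega> * XK b K a4 \<omega>)"
  unfolding prod4_expand by (simp add: int4)

lemma int_XK2: "integrable M (\<lambda>\<omega>. XK b K a1 \<omega> * XK b K a2 \<omega>)"
  unfolding prod2_expand by (simp add: int2)

lemma E_XK2: "integral\<^sup>L M (\<lambda>\<omega>. XK b K s \<omega> * XK b K t \<omega>) = GK b K s t"
  unfolding prod2_expand GK_def
  by (simp add: integral_sum integrable_sum int2 E2 mult_ac)

lemma E_XK4: "integral\<^sup>L M (\<lambda>\<omega>. XK b K a1 \<omega> * XK b K a2 \<omega> * XK b K a3 \<omega> * XK b K a4 \<omega>)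
  = QK b K a1 a2 a3 a4 + GK b K a1 a2 * GK b K a3 a4 + GK b K a1 a3 * GK b K a2 a4 + GK b K a1 a4 * GK b K a2 a3"
proof -
  let ?c = "\<lambda>i j k l. b i * b j * b k * b l"
  have "integral\<^sup>L M (\<lambda>\<omega>. XK b K a1 \<omega> * XK b K a2 \<omega> * XK b K a3 \<omega> * XK b K a4 \<omega>)
     = (\<Sum>i<K. \<Sum>j<K. \<Sum>k<K. \<Sum>l<K. ?c i j k l *
        integral\<^sup>L M (\<lambda>\<omega>. U (a1 - int i) \<omega> * U (a2 - int j) \<omega> * U (a3 - int k) \<omega> * U (a4 - int l) \<omega>))"
    unfolding prod4_expand by (simp add: integral_sum integrable_sum int4)
  also have "\<dots> = (\<Sum>i<K. \<Sum>j<K. \<Sum>k<K. \<Sum>l<K.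
        ?c i j k l * kap ((a2 - int j) - (a1 - int i)) ((a3 - int k) - (a1 - int i)) ((a4 - int l) - (a1 - int i))
      + (b i * b j * gU ((a2 - int j) - (a1 - int i))) * (b k * b l * gU ((a4 - int l) - (a3 - int k)))
      + (b i * b k * gU ((a3 - int k) - (a1 - int i))) * (b j * b l * gU ((a4 - int l) - (a2 - int j)))
      + (b i * b l * gU ((a4 - int l) - (a1 - int i))) * (b j * b k * gU ((a3 - int k) - (a2 - int j))))"
    unfolding E4 by (intro sum.cong refl) (simp add: algebra_simps)
  also have "\<dots> = QK b K a1 a2 a3 a4 + GK b K a1 a2 * GK b K a3 a4 + GK b K a1 a3 * GK b K a2 a4 + GK b K a1 a4 * GK b K a2 a3"
    unfolding QK_def GK_def sum.distrib sum4_12 sum4_13 sum4_14 ..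
  finally show ?thesis .
qed

end

context Uproc
begin

lemma GK_diag: "GK b K t t = GK b K 0 0"
  unfolding GK_def by simp

lemma GK_abs: 
  assumes gmax: "\<And>h. \<bar>gU h\<bar> \<le> Gs"
  shows "\<bar>GK b K s t\<bar> \<le> (\<Sum>i<K. \<bar>b i\<bar>)^2 * Gs"
proof -
  have "\<bar>GK b K s t\<bar> \<le> (\<Sum>i<K. \<Sum>j<K. \<bar>b i\<bar> * \<bar>b j\<bar> * \<bar>gU ((t - int j) - (s - int i))\<bar>)"
    unfolding GK_def by (rule order_trans[OF sum_abs sum_mono], rule order_trans[OF sum_abs sum_mono]) (simp add: abs_mult)
  also have "\<dots> \<le> (\<Sum>i<K. \<Sum>j<K. \<bar>b i\<bar> * \<bar>b j\<bar> * Gs)"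
    by (intro sum_mono mult_left_mono gmax) auto
  also have "\<dots> = (\<Sum>i<K. \<bar>b i\<bar>)^2 * Gs"
    by (simp add: power2_eq_square sum_distrib_left sum_distrib_right mult_ac)
  finally show ?thesis .
qed

lemma GK_sum_abs:
  assumes gsum: "\<And>c. (\<Sum>t\<in>{1..int n}. \<bar>gU (t + c)\<bar>) \<le> Gs"
  shows "(\<Sum>s\<in>{1..int n}. \<Sum>t\<in>{1..int n}. \<bar>GK b K s t\<bar>) \<le> real n * (\<Sum>i<K. \<bar>b i\<bar>)^2 * Gs"
proof -
  let ?I = "{1..int n}"
  have "(\<Sum>s\<in>?I. \<Sum>t\<in>?I. \<bar>GK b K s t\<bar>) \<le> (\<Sum>s\<in>?I. \<Sum>t\<in>?I. \<Sum>i<K. \<Sum>j<K. \<bar>b i\<bar> * \<bar>b j\<bar> * \<bar>gU (t + (int i - int j - s))\<bar>)"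
    unfolding GK_def
    by (intro sum_mono, rule order_trans[OF sum_abs sum_mono], rule order_trans[OF sum_abs sum_mono]) (simp add: abs_mult algebra_simps)
  also have "\<dots> = (\<Sum>s\<in>?I. \<Sum>i<K. \<Sum>j<K. \<bar>b i\<bar> * \<bar>b j\<bar> * (\<Sum>t\<in>?I. \<bar>gU (t + (int i - int j - s))\<bar>))"
  proof (rule sum.cong[OF refl])
    fix s
    have "(\<Sum>t\<in>?I. \<Sum>i<K. \<Sum>j<K. \<bar>b i\<bar> * \<bar>b j\<bar> * \<bar>gU (t + (int i - int j - s))\<bar>)
        = (\<Sum>i<K. \<Sum>t\<in>?I. \<Sum>j<K. \<bar>b i\<bar> * \<bar>b j\<bar> * \<bar>gU (t + (int i - int j - s))\<bar>)"
      by (rule sum.swap)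
    also have "\<dots> = (\<Sum>i<K. \<Sum>j<K. \<Sum>t\<in>?I. \<bar>b i\<bar> * \<bar>b j\<bar> * \<bar>gU (t + (int i - int j - s))\<bar>)"
      by (rule sum.cong[OF refl], rule sum.swap)
    finally show "(\<Sum>t\<in>?I. \<Sum>i<K. \<Sum>j<K. \<bar>b i\<bar> * \<bar>b j\<bar> * \<bar>gU (t + (int i - int j - s))\<bar>)
        = (\<Sum>i<K. \<Sum>j<K. \<bar>b i\<bar> * \<bar>b j\<bar> * (\<Sum>t\<in>?I. \<bar>gU (t + (int i - int j - s))\<bar>))"
      by (simp add: sum_distrib_left)
  qed
  also have "\<dots> \<le> (\<Sum>s\<in>?I. \<Sum>i<K. \<Sum>j<K. \<bar>b i\<bar> * \<bar>b j\<bar> * Gs)"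
    by (intro sum_mono mult_left_mono gsum) auto
  also have "\<dots> = real n * (\<Sum>i<K. \<bar>b i\<bar>)^2 * Gs"
    by (simp add: power2_eq_square sum_distrib_left sum_distrib_right mult_ac)
  finally show ?thesis .
qed

lemma QK_sum_abs:
  assumes ksum: "\<And>h c2 c3. (\<Sum>t\<in>{1..int n}. \<bar>kap h (t + c2) (t + c3)\<bar>) \<le> Ks"
  shows "(\<Sum>s\<in>{1..int n}. \<Sum>t\<in>{1..int n}. \<bar>QK b K s s t t\<bar>) \<le> real n * (\<Sum>i<K. \<bar>b i\<bar>)^4 * Ks"
proof -
  let ?I = "{1..int n}"
  let ?B = "\<lambda>i j k l. \<bar>b i\<bar> * \<bar>b j\<bar> * \<bar>b k\<bar> * \<bar>b l\<bar>"
  let ?k = "\<lambda>s i j k l t. \<bar>kap (int i - int j) (t + (int i - int k - s)) (t + (int i - int l - s))\<bar>"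
  have "(\<Sum>s\<in>?I. \<Sum>t\<in>?I. \<bar>QK b K s s t t\<bar>) \<le> (\<Sum>s\<in>?I. \<Sum>t\<in>?I. \<Sum>i<K. \<Sum>j<K. \<Sum>k<K. \<Sum>l<K. ?B i j k l * ?k s i j k l t)"
    unfolding QK_def
    by (intro sum_mono, rule order_trans[OF sum_abs sum_mono], rule order_trans[OF sum_abs sum_mono],
        rule order_trans[OF sum_abs sum_mono], rule order_trans[OF sum_abs sum_mono]) (simp add: abs_mult algebra_simps)
  also have "\<dots> = (\<Sum>s\<in>?I. \<Sum>i<K. \<Sum>j<K. \<Sum>k<K. \<Sum>l<K. ?B i j k l * (\<Sum>t\<in>?I. ?k s i j k l t))"
  proof (rule sum.cong[OF refl])
    fix s
    have "(\<Sum>t\<in>?I. \<Sum>i<K. \<Sum>j<K. \<Sum>k<K. \<Sum>l<K. ?B i j k l * ?k s i j k l t)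
        = (\<Sum>i<K. \<Sum>t\<in>?I. \<Sum>j<K. \<Sum>k<K. \<Sum>l<K. ?B i j k l * ?k s i j k l t)"
      by (rule sum.swap)
    also have "\<dots> = (\<Sum>i<K. \<Sum>j<K. \<Sum>t\<in>?I. \<Sum>k<K. \<Sum>l<K. ?B i j k l * ?k s i j k l t)"
      by (rule sum.cong[OF refl], rule sum.swap)
    also have "\<dots> = (\<Sum>i<K. \<Sum>j<K. \<Sum>k<K. \<Sum>t\<in>?I. \<Sum>l<K. ?B i j k l * ?k s i j k l t)"
      by (rule sum.cong[OF refl], rule sum.cong[OF refl], rule sum.swap)
    also have "\<dots> = (\<Sum>i<K. \<Sum>j<K. \<Sum>k<K. \<Sum>l<K. \<Sum>t\<in>?I. ?B i j k l * ?k s i j k l t)"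
      by (rule sum.cong[OF refl], rule sum.cong[OF refl], rule sum.cong[OF refl], rule sum.swap)
    finally show "(\<Sum>t\<in>?I. \<Sum>i<K. \<Sum>j<K. \<Sum>k<K. \<Sum>l<K. ?B i j k l * ?k s i j k l t)
        = (\<Sum>i<K. \<Sum>j<K. \<Sum>k<K. \<Sum>l<K. ?B i j k l * (\<Sum>t\<in>?I. ?k s i j k l t))"
      by (simp add: sum_distrib_left)
  qed
  also have "\<dots> \<le> (\<Sum>s\<in>?I. \<Sum>i<K. \<Sum>j<K. \<Sum>k<K. \<Sum>l<K. ?B i j k l * Ks)"
    by (intro sum_mono mult_left_mono ksum) auto
  also have "\<dots> = real n * (\<Sum>i<K. \<bar>b i\<bar>)^4 * Ks"
  proof -
    have "(\<Sum>i<K. \<Sum>j<K. \<Sum>k<K. \<Sum>l<K. ?B i j k l) = (\<Sum>i<K. \<bar>b i\<bar>)^4"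
      by (simp add: power4_eq_xxxx sum_distrib_left sum_distrib_right mult_ac)
    moreover have "(\<Sum>i<K. \<Sum>j<K. \<Sum>k<K. \<Sum>l<K. ?B i j k l * Ks) = (\<Sum>i<K. \<Sum>j<K. \<Sum>k<K. \<Sum>l<K. ?B i j k l) * Ks"
      by (simp add: sum_distrib_right)
    ultimately show ?thesis by simp
  qed
  finally show ?thesis .
qed

end

context Uproc
begin

lemma E_cent:
  "integral\<^sup>L M (\<lambda>\<omega>. ((XK b K s \<omega>)^2 - GK b K 0 0) * ((XK b K t \<omega>)^2 - GK b K 0 0))
     = QK b K s s t t + 2 * (GK b K s t)^2"
proof -
  let ?v = "GK b K 0 0"
  have eq: "(\<lambda>\<omega>. ((XK b K s \<omega>)^2 - ?v) * ((XK b K t \<omega>)^2 - ?v)) =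
     (\<lambda>\<omega>. (XK b K s \<omega> * XK b K s \<omega> * XK b K t \<omega> * XK b K t \<omega> - ?v * (XK b K s \<omega> * XK b K s \<omega>))
        - ?v * (XK b K t \<omega> * XK b K t \<omega>) + ?v^2)"
    by (rule ext) (simp add: power2_eq_square algebra_simps)
  have "integral\<^sup>L M (\<lambda>\<omega>. ((XK b K s \<omega>)^2 - ?v) * ((XK b K t \<omega>)^2 - ?v))
     = (QK b K s s t t + GK b K s s * GK b K t t + GK b K s t * GK b K s t + GK b K s t * GK b K s t)
       - ?v * GK b K s s - ?v * GK b K t t + ?v^2"
    unfolding eq
    by (simp add: int_XK4 int_XK2 E_XK4 E_XK2 prob_space)
  also have "\<dots> = QK b K s s t t + 2 * (GK b K s t)^2"
    using GK_diag[of b K s] GK_diag[of b K t] by (simp add: power2_eq_square)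
  finally show ?thesis .
qed

lemma int_cent: "integrable M (\<lambda>\<omega>. ((XK b K s \<omega>)^2 - c) * ((XK b K t \<omega>)^2 - c))"
proof -
  have eq: "(\<lambda>\<omega>. ((XK b K s \<omega>)^2 - c) * ((XK b K t \<omega>)^2 - c)) =
     (\<lambda>\<omega>. (XK b K s \<omega> * XK b K s \<omega> * XK b K t \<omega> * XK b K t \<omega> - c * (XK b K s \<omega> * XK b K s \<omega>))
        - c * (XK b K t \<omega> * XK b K t \<omega>) + c^2)"
    by (rule ext) (simp add: power2_eq_square algebra_simps)
  show ?thesis unfolding eq by (simp add: int_XK4 int_XK2)
qed

lemma E_lin2:
  fixes p :: "int \<Rightarrow> real" and I :: "int set"
  shows "integral\<^sup>L M (\<lambda>\<omega>. (\<Sum>t\<in>I. p t * XK b K t \<omega>)^2) = (\<Sum>s\<in>I. \<Sum>t\<in>I. p s * p t * GK b K s t)"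
proof -
  have eq: "(\<lambda>\<omega>. (\<Sum>t\<in>I. p t * XK b K t \<omega>)^2) = (\<lambda>\<omega>. \<Sum>s\<in>I. \<Sum>t\<in>I. (p s * p t) * (XK b K s \<omega> * XK b K t \<omega>))"
    by (rule ext) (simp add: power2_eq_square sum_product mult_ac)
  show ?thesis unfolding eq by (simp add: int_XK2 E_XK2)
qed

lemma int_lin2: "integrable M (\<lambda>\<omega>. (\<Sum>t\<in>I. p t * XK b K t \<omega>)^2)"
proof -
  have eq: "(\<lambda>\<omega>. (\<Sum>t\<in>I. p t * XK b K t \<omega>)^2) = (\<lambda>\<omega>. \<Sum>s\<in>I. \<Sum>t\<in>I. (p s * p t) * (XK b K s \<omega> * XK b K t \<omega>))"
    by (rule ext) (simp add: power2_eq_square sum_product mult_ac)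
  show ?thesis unfolding eq by (simp add: int_XK2)
qed

definition TK :: "(nat \<Rightarrow> real) \<Rightarrow> nat \<Rightarrow> nat \<Rightarrow> 'a \<Rightarrow> real" where
  "TK b K n \<omega> = (\<Sum>t\<in>{1..int n}. (XK b K t \<omega>)^2) / real n"

lemma E_Tdev:
  assumes n: "n \<ge> 1"
  shows "integral\<^sup>L M (\<lambda>\<omega>. (TK b K n \<omega> - GK b K 0 0)^2)
     = (\<Sum>s\<in>{1..int n}. \<Sum>t\<in>{1..int n}. QK b K s s t t + 2 * (GK b K s t)^2) / (real n)^2"
proof -
  let ?I = "{1..int n}" and ?v = "GK b K 0 0"
  have cI: "card ?I = n" by simp
  have eq: "(\<lambda>\<omega>. (TK b K n \<omega> - ?v)^2) =
     (\<lambda>\<omega>. (\<Sum>s\<in>?I. \<Sum>t\<in>?I. ((XK b K s \<omega>)^2 - ?v) * ((XK b K t \<omega>)^2 - ?v)) / (real n)^2)"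
  proof (rule ext)
    fix \<omega>
    have "TK b K n \<omega> - ?v = (\<Sum>t\<in>?I. ((XK b K t \<omega>)^2 - ?v)) / real n"
      unfolding TK_def using n by (simp add: sum_subtractf field_simps)
    then show "(TK b K n \<omega> - ?v)^2 = (\<Sum>s\<in>?I. \<Sum>t\<in>?I. ((XK b K s \<omega>)^2 - ?v) * ((XK b K t \<omega>)^2 - ?v)) / (real n)^2"
      by (simp add: power_divide power2_eq_square sum_product)
  qed
  show ?thesis unfolding eq
    by (simp add: int_cent E_cent)
qed

lemma int_Tdev: "integrable M (\<lambda>\<omega>. (TK b K n \<omega> - c)^2)"
proof -
  have eq: "(\<lambda>\<omega>. (TK b K n \<omega> - c)^2) = (\<lambda>\<omega>. (\<Sum>s\<in>{1..int n}. \<Sum>t\<in>{1..int n}. (1 / real n)^2 * (XK b K s \<omega> * XK b K s \<omega> * XK b K t \<omega> * XK b K t \<omega>))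
      - 2 * c * (\<Sum>t\<in>{1..int n}. (1 / real n) * (XK b K t \<omega> * XK b K t \<omega>)) + c^2)"
    by (rule ext) (simp add: TK_def power2_eq_square sum_product sum_divide_distrib sum_distrib_left algebra_simps)
  show ?thesis unfolding eq by (simp add: int_XK4 int_XK2)
qed

end

lemma abs_le_sq_bound: "a > 0 \<Longrightarrow> \<bar>z::real\<bar> \<le> z^2 / (2 * a) + a / 2"
proof -
  assume a: "a > 0"
  have "0 \<le> (\<bar>z\<bar> - a)^2" by simp
  then have "2 * a * \<bar>z\<bar> \<le> z^2 + a^2" by (simp add: power2_eq_square algebra_simps)
  then show ?thesis using a by (simp add: field_simps power2_eq_square)
qed

lemma abs_tri3: "0 \<le> A \<Longrightarrow> 0 \<le> (B::real) \<Longrightarrow> \<bar>T - A + (if e then B else 0) - v\<bar> \<le> \<bar>T - v\<bar> + A + B"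
  by (cases e) (simp_all add: abs_le_iff, linarith+)

context Uproc
begin

lemma lin2_bound:
  assumes p: "\<And>t. \<bar>p t\<bar> \<le> 1" and gsum: "\<And>c. (\<Sum>t\<in>{1..int n}. \<bar>gU (t + c)\<bar>) \<le> Gs"
  shows "integral\<^sup>L M (\<lambda>\<omega>. (\<Sum>t\<in>{1..int n}. p t * XK b K t \<omega>)^2) \<le> real n * (\<Sum>i<K. \<bar>b i\<bar>)^2 * Gs"
proof -
  have "integral\<^sup>L M (\<lambda>\<omega>. (\<Sum>t\<in>{1..int n}. p t * XK b K t \<omega>)^2) = (\<Sum>s\<in>{1..int n}. \<Sum>t\<in>{1..int n}. p s * p t * GK b K s t)"
    by (rule E_lin2)
  also have "\<dots> \<le> (\<Sum>s\<in>{1..int n}. \<Sum>t\<in>{1..int n}. \<bar>GK b K s t\<bar>)"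
  proof (intro sum_mono)
    fix s t
    have "\<bar>p s * p t\<bar> \<le> 1" using p[of s] p[of t] by (simp add: abs_mult mult_le_one)
    then have "\<bar>p s * p t * GK b K s t\<bar> \<le> \<bar>GK b K s t\<bar>"
      by (simp add: abs_mult mult_left_le_one_le)
    then show "p s * p t * GK b K s t \<le> \<bar>GK b K s t\<bar>" by simp
  qed
  also have "\<dots> \<le> real n * (\<Sum>i<K. \<bar>b i\<bar>)^2 * Gs" by (rule GK_sum_abs[OF gsum])
  finally show ?thesis .
qed

lemma Tdev_bound:
  assumes n: "n \<ge> 1"
    and gmax: "\<And>h. \<bar>gU h\<bar> \<le> Gs"
    and gsum: "\<And>c. (\<Sum>t\<in>{1..int n}. \<bar>gU (t + c)\<bar>) \<le> Gs"
    and ksum: "\<And>h c2 c3. (\<Sum>t\<in>{1..int n}. \<bar>kap h (t + c2) (t + c3)\<bar>) \<le> Ks"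
  shows "integral\<^sup>L M (\<lambda>\<omega>. (TK b K n \<omega> - GK b K 0 0)^2) \<le> (\<Sum>i<K. \<bar>b i\<bar>)^4 * (Ks + 2 * Gs^2) / real n"
proof -
  let ?I = "{1..int n}" and ?B = "\<Sum>i<K. \<bar>b i\<bar>"
  have Gs0: "0 \<le> Gs" using gmax[of 0] by simp
  have "(\<Sum>s\<in>?I. \<Sum>t\<in>?I. QK b K s s t t + 2 * (GK b K s t)^2)
      \<le> (\<Sum>s\<in>?I. \<Sum>t\<in>?I. \<bar>QK b K s s t t\<bar>) + 2 * (\<Sum>s\<in>?I. \<Sum>t\<in>?I. \<bar>GK b K s t\<bar> * (?B^2 * Gs))"
  proof -
    have "(\<Sum>s\<in>?I. \<Sum>t\<in>?I. QK b K s s t t + 2 * (GK b K s t)^2)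
       \<le> (\<Sum>s\<in>?I. \<Sum>t\<in>?I. \<bar>QK b K s s t t\<bar> + 2 * (\<bar>GK b K s t\<bar> * (?B^2 * Gs)))"
    proof (intro sum_mono add_mono)
      fix s t
      show "QK b K s s t t \<le> \<bar>QK b K s s t t\<bar>" by simp
      have "(GK b K s t)^2 = \<bar>GK b K s t\<bar> * \<bar>GK b K s t\<bar>" by (simp add: power2_eq_square abs_mult_self_eq)
      also have "\<dots> \<le> \<bar>GK b K s t\<bar> * (?B^2 * Gs)" by (intro mult_left_mono GK_abs gmax) simp
      finally show "2 * (GK b K s t)^2 \<le> 2 * (\<bar>GK b K s t\<bar> * (?B^2 * Gs))" by simp
    qed
    then show ?thesis by (simp add: sum.distrib sum_distrib_left)
  qed
  also have "\<dots> \<le> real n * ?B^4 * Ks + 2 * ((real n * ?B^2 * Gs) * (?B^2 * Gs))"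
  proof (intro add_mono mult_left_mono)
    show "(\<Sum>s\<in>?I. \<Sum>t\<in>?I. \<bar>QK b K s s t t\<bar>) \<le> real n * ?B^4 * Ks" by (rule QK_sum_abs[OF ksum])
    have "(\<Sum>s\<in>?I. \<Sum>t\<in>?I. \<bar>GK b K s t\<bar> * (?B^2 * Gs)) = (\<Sum>s\<in>?I. \<Sum>t\<in>?I. \<bar>GK b K s t\<bar>) * (?B^2 * Gs)"
      by (simp add: sum_distrib_right)
    also have "\<dots> \<le> (real n * ?B^2 * Gs) * (?B^2 * Gs)"
      by (intro mult_right_mono GK_sum_abs gsum) (simp add: Gs0)
    finally show "(\<Sum>s\<in>?I. \<Sum>t\<in>?I. \<bar>GK b K s t\<bar> * (?B^2 * Gs)) \<le> (real n * ?B^2 * Gs) * (?B^2 * Gs)" .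
  qed simp
  also have "\<dots> = real n * (?B^4 * (Ks + 2 * Gs^2))" by (simp add: algebra_simps power2_eq_square power4_eq_xxxx)
  finally have "(\<Sum>s\<in>?I. \<Sum>t\<in>?I. QK b K s s t t + 2 * (GK b K s t)^2) / (real n)^2 \<le> real n * (?B^4 * (Ks + 2 * Gs^2)) / (real n)^2"
    by (simp add: divide_right_mono)
  then show ?thesis unfolding E_Tdev[OF n] using n by (simp add: power2_eq_square)
qed

lemma gamma_hat_XK:
  assumes n: "n \<ge> 1"
  shows "gamma_hat n (\<lambda>t. XK b K t \<omega>) = TK b K n \<omega> - (\<Sum>t\<in>{1..int n}. 1 * XK b K t \<omega>)^2 / (real n)^2
    + (if even n then (\<Sum>t\<in>{1..int n}. (-1) ^ nat t * XK b K t \<omega>)^2 / (real n)^2 else 0)"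
  unfolding gamma_hat_eq[OF n] TK_def by (simp add: power_divide)

lemma finite_bound:
  assumes n: "n \<ge> 1" and a: "a > 0"
    and gmax: "\<And>h. \<bar>gU h\<bar> \<le> Gs"
    and gsum: "\<And>c. (\<Sum>t\<in>{1..int n}. \<bar>gU (t + c)\<bar>) \<le> Gs"
    and ksum: "\<And>h c2 c3. (\<Sum>t\<in>{1..int n}. \<bar>kap h (t + c2) (t + c3)\<bar>) \<le> Ks"
  shows "integrable M (\<lambda>\<omega>. \<bar>gamma_hat n (\<lambda>t. XK b K t \<omega>) - GK b K 0 0\<bar>)"
    and "integral\<^sup>L M (\<lambda>\<omega>. \<bar>gamma_hat n (\<lambda>t. XK b K t \<omega>) - GK b K 0 0\<bar>)
      \<le> (\<Sum>i<K. \<bar>b i\<bar>)^4 * (Ks + 2 * Gs^2) / (2 * a * real n) + a / 2 + 2 * (\<Sum>i<K. \<bar>b i\<bar>)^2 * Gs / real n"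
proof -
  let ?I = "{1..int n}" and ?v = "GK b K 0 0" and ?B = "\<Sum>i<K. \<bar>b i\<bar>"
  let ?p = "\<lambda>t::int. (-1::real) ^ nat t"
  define R where "R = (\<lambda>\<omega>. (TK b K n \<omega> - ?v)^2 / (2 * a) + a / 2
      + (\<Sum>t\<in>?I. 1 * XK b K t \<omega>)^2 / (real n)^2 + (\<Sum>t\<in>?I. ?p t * XK b K t \<omega>)^2 / (real n)^2)"
  have Rint: "integrable M R" unfolding R_def
    by (intro Bochner_Integration.integrable_add integrable_divide int_Tdev int_lin2) (simp_all add: prob_space)
  have pt: "\<bar>gamma_hat n (\<lambda>t. XK b K t \<omega>) - ?v\<bar> \<le> R \<omega>" for \<omega>
  proof -
    have "\<bar>gamma_hat n (\<lambda>t. XK b K t \<omega>) - ?v\<bar> \<le> \<bar>TK b K n \<omega> - ?v\<bar>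
        + (\<Sum>t\<in>?I. 1 * XK b K t \<omega>)^2 / (real n)^2 + (\<Sum>t\<in>?I. ?p t * XK b K t \<omega>)^2 / (real n)^2"
      unfolding gamma_hat_XK[OF n] by (rule abs_tri3) simp_all
    also have "\<bar>TK b K n \<omega> - ?v\<bar> \<le> (TK b K n \<omega> - ?v)^2 / (2 * a) + a / 2" by (rule abs_le_sq_bound[OF a])
    finally show ?thesis unfolding R_def by simp
  qed
  have meas: "(\<lambda>\<omega>. \<bar>gamma_hat n (\<lambda>t. XK b K t \<omega>) - ?v\<bar>) \<in> borel_measurable M"
    unfolding gamma_hat_XK[OF n] TK_def by measurable
  show int: "integrable M (\<lambda>\<omega>. \<bar>gamma_hat n (\<lambda>t. XK b K t \<omega>) - ?v\<bar>)"
    by (rule Bochner_Integration.integrable_bound[OF Rint meas]) (use pt in \<open>auto intro!: AE_I2 order_trans[OF _ abs_ge_self]\<close>)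
  have "integral\<^sup>L M (\<lambda>\<omega>. \<bar>gamma_hat n (\<lambda>t. XK b K t \<omega>) - ?v\<bar>) \<le> integral\<^sup>L M R"
    by (rule integral_mono[OF int Rint]) (use pt in auto)
  also have "integral\<^sup>L M R = integral\<^sup>L M (\<lambda>\<omega>. (TK b K n \<omega> - ?v)^2) / (2 * a) + a / 2
      + integral\<^sup>L M (\<lambda>\<omega>. (\<Sum>t\<in>?I. 1 * XK b K t \<omega>)^2) / (real n)^2
      + integral\<^sup>L M (\<lambda>\<omega>. (\<Sum>t\<in>?I. ?p t * XK b K t \<omega>)^2) / (real n)^2"
  proof -
    have i0: "integrable M (\<lambda>\<omega>. (TK b K n \<omega> - ?v)^2 / (2 * a))" by (intro integrable_divide int_Tdev)
    have i1: "integrable M (\<lambda>\<omega>. (\<Sum>t\<in>?I. 1 * XK b K t \<omega>)^2 / (real n)^2)" by (intro integrable_divide int_lin2)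
    have i2: "integrable M (\<lambda>\<omega>. (\<Sum>t\<in>?I. ?p t * XK b K t \<omega>)^2 / (real n)^2)" by (intro integrable_divide int_lin2)
    have i3: "integrable M (\<lambda>\<omega>. a / 2)" by simp
    have "integral\<^sup>L M R = integral\<^sup>L M (\<lambda>\<omega>. (TK b K n \<omega> - ?v)^2 / (2 * a)) + integral\<^sup>L M (\<lambda>\<omega>. a / 2)
      + integral\<^sup>L M (\<lambda>\<omega>. (\<Sum>t\<in>?I. 1 * XK b K t \<omega>)^2 / (real n)^2)
      + integral\<^sup>L M (\<lambda>\<omega>. (\<Sum>t\<in>?I. ?p t * XK b K t \<omega>)^2 / (real n)^2)"
      unfolding R_def
      by (subst Bochner_Integration.integral_add[OF Bochner_Integration.integrable_add[OF Bochner_Integration.integrable_add[OF i0 i3] i1] i2],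
          subst Bochner_Integration.integral_add[OF Bochner_Integration.integrable_add[OF i0 i3] i1],
          subst Bochner_Integration.integral_add[OF i0 i3]) (rule refl)
    then show ?thesis by (simp only: integral_divide_zero) (simp add: prob_space)
  qed
  also have "\<dots> \<le> ?B^4 * (Ks + 2 * Gs^2) / real n / (2 * a) + a / 2
      + real n * ?B^2 * Gs / (real n)^2 + real n * ?B^2 * Gs / (real n)^2"
    by (intro add_mono divide_right_mono Tdev_bound[OF n gmax gsum ksum] lin2_bound[OF _ gsum]) (use a in auto)
  also have "\<dots> = ?B^4 * (Ks + 2 * Gs^2) / (2 * a * real n) + a / 2 + 2 * ?B^2 * Gs / real n"
    using n by (simp add: field_simps power2_eq_square)
  finally show "integral\<^sup>L M (\<lambda>\<omega>. \<bar>gamma_hat n (\<lambda>t. XK b K t \<omega>) - ?v\<bar>)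
      \<le> ?B^4 * (Ks + 2 * Gs^2) / (2 * a * real n) + a / 2 + 2 * ?B^2 * Gs / real n" .
qed

end

lemma cos_int:
  "((\<lambda>x. cos (real_of_int k * x)) has_integral (if k = 0 then 2 * pi else 0)) {-pi..pi}"
proof (cases "k = 0")
  case True
  then show ?thesis using has_integral_const_real[of "1::real" "-pi" pi] by simp
next
  case False
  let ?f = "\<lambda>x. sin (real_of_int k * x) / real_of_int k"
  have d: "(?f has_vector_derivative cos (real_of_int k * x)) (at x within {-pi..pi})" for x
  proof -
    have "(?f has_real_derivative cos (real_of_int k * x)) (at x within {-pi..pi})"
      using False by (auto intro!: derivative_eq_intros)
    then show ?thesis by (simp add: has_real_derivative_iff_has_vector_derivative)
  qed
  have "((\<lambda>x. cos (real_of_int k * x)) has_integral (?f pi - ?f (-pi))) {-pi..pi}"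
    by (rule fundamental_theorem_of_calculus) (use d in auto)
  moreover have "sin (real_of_int k * pi) = 0" using sin_times_pi_eq_0[of "real_of_int k"] by simp
  ultimately show ?thesis using False by simp
qed

lemma spec_lower:
  fixes fU gU :: "_ \<Rightarrow> real" and b :: "nat \<Rightarrow> real"
  assumes spec: "\<And>h. ((\<lambda>lam. exp (\<i> * complex_of_real (real_of_int h * lam)) * complex_of_real (fU lam))
                    has_integral complex_of_real (gU h)) {-pi..pi}"
    and fmin: "\<And>lam. lam \<in> {-pi..pi} \<Longrightarrow> m \<le> fU lam"
  shows "2 * pi * m * (\<Sum>j<K. (b j)^2) \<le> (\<Sum>i<K. \<Sum>j<K. b i * b j * gU (int i - int j))"
proof -
  have re: "((\<lambda>l. cos (real_of_int h * l) * fU l) has_integral gU h) {-pi..pi}" for h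
  proof -
    have "((Re \<circ> (\<lambda>lam. exp (\<i> * complex_of_real (real_of_int h * lam)) * complex_of_real (fU lam)))
       has_integral Re (complex_of_real (gU h))) {-pi..pi}"
      by (rule has_integral_linear[OF spec bounded_linear_Re])
    then show ?thesis by (simp add: o_def Re_exp)
  qed
  define P where "P = (\<lambda>l. \<Sum>i<K. \<Sum>j<K. b i * b j * cos (real_of_int (int i - int j) * l))"
  have Pnn: "0 \<le> P l" for l
  proof -
    have "P l = (\<Sum>i<K. b i * cos (real i * l))^2 + (\<Sum>i<K. b i * sin (real i * l))^2"
      unfolding P_def power2_eq_square sum_product
      by (simp add: sum.distrib[symmetric] cos_diff algebra_simps)
    then show ?thesis by simp
  qed
  have fP: "((\<lambda>l. fU l * P l) has_integral (\<Sum>i<K. \<Sum>j<K. b i * b j * gU (int i - int j))) {-pi..pi}"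
  proof -
    have "((\<lambda>l. \<Sum>i<K. \<Sum>j<K. (b i * b j) * (cos (real_of_int (int i - int j) * l) * fU l))
        has_integral (\<Sum>i<K. \<Sum>j<K. (b i * b j) * gU (int i - int j))) {-pi..pi}"
      by (intro has_integral_sum finite_lessThan has_integral_mult_right re)
    then show ?thesis unfolding P_def by (simp add: sum_distrib_left mult_ac)
  qed
  have mP: "((\<lambda>l. m * P l) has_integral (2 * pi * m * (\<Sum>j<K. (b j)^2))) {-pi..pi}"
  proof -
    have "((\<lambda>l. \<Sum>i<K. \<Sum>j<K. (m * b i * b j) * cos (real_of_int (int i - int j) * l))
        has_integral (\<Sum>i<K. \<Sum>j<K. (m * b i * b j) * (if int i - int j = 0 then 2 * pi else 0))) {-pi..pi}"
      by (intro has_integral_sum finite_lessThan has_integral_mult_right cos_int)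
    moreover have "(\<Sum>i<K. \<Sum>j<K. (m * b i * b j) * (if int i - int j = 0 then 2 * pi else 0)) = 2 * pi * m * (\<Sum>j<K. (b j)^2)"
    proof -
      have "(\<Sum>i<K. \<Sum>j<K. (m * b i * b j) * (if int i - int j = 0 then 2 * pi else 0))
          = (\<Sum>i<K. \<Sum>j<K. (if i = j then (m * b i * b j) * (2 * pi) else 0))"
        by (intro sum.cong refl) auto
      also have "\<dots> = (\<Sum>i<K. m * b i * b i * (2 * pi))" by simp
      finally show ?thesis by (simp add: sum_distrib_left power2_eq_square mult_ac)
    qed
    ultimately show ?thesis unfolding P_def by (simp add: sum_distrib_left mult_ac)
  qed
  show ?thesis
    by (rule has_integral_le[OF mP fP]) (simp add: mult_right_mono Pnn fmin)
qed

lemma cs_weighted: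
  fixes b u :: "nat \<Rightarrow> real"
  shows "(\<Sum>j<K. b j * u j)^2 \<le> (\<Sum>j<K. \<bar>b j\<bar>) * (\<Sum>j<K. \<bar>b j\<bar> * (u j)^2)"
proof -
  have "\<bar>\<Sum>j<K. b j * u j\<bar> \<le> (\<Sum>j<K. \<bar>b j\<bar> * \<bar>u j\<bar>)"
    by (rule order_trans[OF sum_abs]) (simp add: abs_mult)
  then have "(\<Sum>j<K. b j * u j)^2 \<le> (\<Sum>j<K. \<bar>b j\<bar> * \<bar>u j\<bar>)^2"
    by (metis abs_ge_zero power2_abs power_mono)
  also have "(\<Sum>j<K. \<bar>b j\<bar> * \<bar>u j\<bar>) = (\<Sum>j<K. sqrt \<bar>b j\<bar> * (sqrt \<bar>b j\<bar> * \<bar>u j\<bar>))"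
    by (intro sum.cong refl) (simp add: mult.assoc[symmetric])
  also have "(\<dots>)^2 \<le> (\<Sum>j<K. (sqrt \<bar>b j\<bar>)^2) * (\<Sum>j<K. (sqrt \<bar>b j\<bar> * \<bar>u j\<bar>)^2)"
    by (rule Cauchy_Schwarz_ineq_sum)
  also have "\<dots> = (\<Sum>j<K. \<bar>b j\<bar>) * (\<Sum>j<K. \<bar>b j\<bar> * (u j)^2)"
    by (simp add: power_mult_distrib)
  finally show ?thesis .
qed

context Uproc
begin

definition Xf :: "(nat \<Rightarrow> real) \<Rightarrow> int \<Rightarrow> 'a \<Rightarrow> real" where
  "Xf b t \<omega> = (\<Sum>j. b j * U (t - int j) \<omega>)"

definition W :: "(nat \<Rightarrow> real) \<Rightarrow> int \<Rightarrow> 'a \<Rightarrow> real" where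
  "W b t \<omega> = (\<Sum>j. \<bar>b j\<bar> * (U (t - int j) \<omega>)^2)"

lemma Xf_meas[measurable]: "Xf b t \<in> borel_measurable M"
  unfolding Xf_def by measurable

lemma W_meas[measurable]: "W b t \<in> borel_measurable M"
  unfolding W_def by measurable

lemma EU2: "integral\<^sup>L M (\<lambda>\<omega>. (U a \<omega>)^2) = gU 0"
  using E2[of a a] by (simp add: power2_eq_square)

lemma gU0_nonneg: "0 \<le> gU 0"
  using EU2[of 0] integral_nonneg_AE[of "\<lambda>\<omega>. (U 0 \<omega>)^2" M] by simp

lemma W_summable_AE:
  assumes bs: "summable (\<lambda>j. \<bar>b j\<bar>)"
  shows "AE \<omega> in M. summable (\<lambda>j. \<bar>b j\<bar> * (U (t - int j) \<omega>)^2)"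
proof -
  let ?f = "\<lambda>j \<omega>. ennreal (\<bar>b j\<bar> * (U (t - int j) \<omega>)^2)"
  have "(\<integral>\<^sup>+\<omega>. (\<Sum>j. ?f j \<omega>) \<partial>M) = (\<Sum>j. \<integral>\<^sup>+\<omega>. ?f j \<omega> \<partial>M)"
    by (rule nn_integral_suminf) measurable
  also have "\<dots> = (\<Sum>j. ennreal (\<bar>b j\<bar> * gU 0))"
  proof (intro arg_cong[where f=suminf] ext)
    fix j
    have "(\<integral>\<^sup>+\<omega>. ?f j \<omega> \<partial>M) = ennreal (integral\<^sup>L M (\<lambda>\<omega>. \<bar>b j\<bar> * (U (t - int j) \<omega>)^2))"
      by (rule nn_integral_eq_integral) (auto simp: int_sq)
    also have "integral\<^sup>L M (\<lambda>\<omega>. \<bar>b j\<bar> * (U (t - int j) \<omega>)^2) = \<bar>b j\<bar> * gU 0"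
      by (simp add: EU2)
    finally show "(\<integral>\<^sup>+\<omega>. ?f j \<omega> \<partial>M) = ennreal (\<bar>b j\<bar> * gU 0)" .
  qed
  also have "\<dots> = ennreal (\<Sum>j. \<bar>b j\<bar> * gU 0)"
    by (rule suminf_ennreal2) (auto intro: summable_mult2 bs simp: gU0_nonneg)
  finally have "(\<integral>\<^sup>+\<omega>. (\<Sum>j. ?f j \<omega>) \<partial>M) \<noteq> \<infinity>" by simp
  then have "AE \<omega> in M. (\<Sum>j. ?f j \<omega>) \<noteq> \<infinity>"
    by (intro nn_integral_PInf_AE) measurable
  then show ?thesis
    by eventually_elim (rule summable_suminf_not_top, auto)
qed

lemma W_int:
  assumes bs: "summable (\<lambda>j. \<bar>b j\<bar>)"
  shows "integrable M (W b t)" and "integral\<^sup>L M (W b t) = (\<Sum>j. \<bar>b j\<bar>) * gU 0"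
proof -
  have a: "\<And>j. integrable M (\<lambda>\<omega>. \<bar>b j\<bar> * (U (t - int j) \<omega>)^2)" by (simp add: int_sq)
  have b: "AE \<omega> in M. summable (\<lambda>j. norm (\<bar>b j\<bar> * (U (t - int j) \<omega>)^2))"
    using W_summable_AE[OF bs, of t] by simp
  have c: "summable (\<lambda>j. integral\<^sup>L M (\<lambda>\<omega>. norm (\<bar>b j\<bar> * (U (t - int j) \<omega>)^2)))"
    by (simp add: EU2 summable_mult2 bs)
  show "integrable M (W b t)" unfolding W_def[abs_def] by (rule integrable_suminf[OF a b c])
  have "integral\<^sup>L M (W b t) = (\<Sum>j. integral\<^sup>L M (\<lambda>\<omega>. \<bar>b j\<bar> * (U (t - int j) \<omega>)^2))"
    unfolding W_def[abs_def] by (rule integral_suminf[OF a b c])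
  also have "\<dots> = (\<Sum>j. \<bar>b j\<bar> * gU 0)" by (simp add: EU2)
  also have "\<dots> = (\<Sum>j. \<bar>b j\<bar>) * gU 0" by (rule suminf_mult2[symmetric]) (rule bs)
  finally show "integral\<^sup>L M (W b t) = (\<Sum>j. \<bar>b j\<bar>) * gU 0" .
qed

lemma XK_lim_bound:
  assumes bs: "summable (\<lambda>j. \<bar>b j\<bar>)"
  shows "AE \<omega> in M. (\<lambda>K. XK b K t \<omega>) \<longlonglongrightarrow> Xf b t \<omega> \<and> (\<forall>K. (XK b K t \<omega>)^2 \<le> (\<Sum>j. \<bar>b j\<bar>) * W b t \<omega>)"
  using W_summable_AE[OF bs, of t]
proof eventually_elim
  case (elim \<omega>)
  let ?u = "\<lambda>j. U (t - int j) \<omega>"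
  have s1: "summable (\<lambda>j. \<bar>b j\<bar> + \<bar>b j\<bar> * (?u j)^2)" using bs elim by (rule summable_add)
  have "summable (\<lambda>j. b j * ?u j)"
  proof (rule summable_comparison_test'[OF s1, where N=0])
    fix j :: nat assume "0 \<le> j"
    have "\<bar>?u j\<bar> \<le> 1 + (?u j)^2" using abs_mult_le_sq[of "?u j" 1] by simp
    then have "\<bar>b j\<bar> * \<bar>?u j\<bar> \<le> \<bar>b j\<bar> * (1 + (?u j)^2)" by (rule mult_left_mono) simp
    then show "norm (b j * ?u j) \<le> \<bar>b j\<bar> + \<bar>b j\<bar> * (?u j)^2" by (simp add: abs_mult algebra_simps)
  qed
  then have lim: "(\<lambda>K. XK b K t \<omega>) \<longlonglongrightarrow> Xf b t \<omega>"
    unfolding XK_def Xf_def by (rule summable_LIMSEQ)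
  have bnd: "(XK b K t \<omega>)^2 \<le> (\<Sum>j. \<bar>b j\<bar>) * W b t \<omega>" for K
  proof -
    have "(XK b K t \<omega>)^2 \<le> (\<Sum>j<K. \<bar>b j\<bar>) * (\<Sum>j<K. \<bar>b j\<bar> * (?u j)^2)"
      unfolding XK_def by (rule cs_weighted)
    also have "\<dots> \<le> (\<Sum>j. \<bar>b j\<bar>) * W b t \<omega>"
      unfolding W_def
      by (intro mult_mono sum_le_suminf bs elim) (auto intro: sum_nonneg suminf_nonneg bs)
    finally show ?thesis .
  qed
  show ?case using lim bnd by blast
qed

end

lemma cs_card:
  fixes p x :: "int \<Rightarrow> real"
  assumes "finite I" "\<And>t. \<bar>p t\<bar> \<le> 1"
  shows "(\<Sum>t\<in>I. p t * x t)^2 \<le> real (card I) * (\<Sum>t\<in>I. (x t)^2)"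
proof -
  have "(\<Sum>t\<in>I. p t * x t)^2 \<le> (\<Sum>t\<in>I. (p t)^2) * (\<Sum>t\<in>I. (x t)^2)" by (rule Cauchy_Schwarz_ineq_sum)
  also have "(\<Sum>t\<in>I. (p t)^2) \<le> (\<Sum>t\<in>I. 1)"
  proof (rule sum_mono)
    fix t show "(p t)^2 \<le> 1" using assms(2)[of t] by (simp add: abs_square_le_1)
  qed
  then have "(\<Sum>t\<in>I. (p t)^2) * (\<Sum>t\<in>I. (x t)^2) \<le> (\<Sum>t\<in>I. 1) * (\<Sum>t\<in>I. (x t)^2)"
    by (intro mult_right_mono) (auto intro: sum_nonneg)
  finally show ?thesis by simp
qed

lemma abs3: "0 \<le> A \<Longrightarrow> A \<le> T \<Longrightarrow> 0 \<le> B \<Longrightarrow> B \<le> T \<Longrightarrow> \<bar>T - A + (if e then B else 0)\<bar> \<le> 3 * (T::real)"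
  by (cases e) auto

lemma gamma_hat_abs_bound:
  fixes x :: "int \<Rightarrow> real" assumes n: "n \<ge> 1"
  shows "\<bar>gamma_hat n x\<bar> \<le> 3 * ((\<Sum>t\<in>{1..int n}. (x t)^2) / real n)"
proof -
  let ?I = "{1..int n}"
  let ?T = "(\<Sum>t\<in>?I. (x t)^2) / real n"
  have A: "((\<Sum>t\<in>?I. x t) / real n)^2 \<le> ?T"
  proof -
    have "(\<Sum>t\<in>?I. 1 * x t)^2 \<le> real (card ?I) * (\<Sum>t\<in>?I. (x t)^2)" by (rule cs_card) auto
    then have "(\<Sum>t\<in>?I. x t)^2 \<le> real n * (\<Sum>t\<in>?I. (x t)^2)" by simp
    then show ?thesis using n by (simp add: power_divide field_simps power2_eq_square)
  qed
  have B: "((\<Sum>t\<in>?I. (-1) ^ nat t * x t) / real n)^2 \<le> ?T"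
  proof -
    have "(\<Sum>t\<in>?I. (-1) ^ nat t * x t)^2 \<le> real (card ?I) * (\<Sum>t\<in>?I. (x t)^2)" by (rule cs_card) auto
    then have "(\<Sum>t\<in>?I. (-1) ^ nat t * x t)^2 \<le> real n * (\<Sum>t\<in>?I. (x t)^2)" by simp
    then show ?thesis using n by (simp add: power_divide field_simps power2_eq_square)
  qed
  have T0: "0 \<le> ?T" by (intro divide_nonneg_nonneg sum_nonneg) auto
  show ?thesis unfolding gamma_hat_eq[OF n]
    by (rule abs3[OF zero_le_power2 A zero_le_power2 B])
qed

context Uproc
begin

lemma EXK2_eq: "GK b K 0 0 = integral\<^sup>L M (\<lambda>\<omega>. (XK b K 1 \<omega>)^2)"
  using E_XK2[of b K 1 1] GK_diag[of b K 1] by (simp add: power2_eq_square)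

lemma v_lim:
  assumes bs: "summable (\<lambda>j. \<bar>b j\<bar>)"
  shows "(\<lambda>K. GK b K 0 0) \<longlonglongrightarrow> integral\<^sup>L M (\<lambda>\<omega>. (Xf b 1 \<omega>)^2)"
proof -
  have "(\<lambda>K. integral\<^sup>L M (\<lambda>\<omega>. (XK b K 1 \<omega>)^2)) \<longlonglongrightarrow> integral\<^sup>L M (\<lambda>\<omega>. (Xf b 1 \<omega>)^2)"
  proof (rule integral_dominated_convergence[where w="\<lambda>\<omega>. (\<Sum>j. \<bar>b j\<bar>) * W b 1 \<omega>"])
    show "integrable M (\<lambda>\<omega>. (\<Sum>j. \<bar>b j\<bar>) * W b 1 \<omega>)" using W_int(1)[OF bs] by simp
    show "AE \<omega> in M. (\<lambda>K. (XK b K 1 \<omega>)^2) \<longlonglongrightarrow> (Xf b 1 \<omega>)^2"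
      using XK_lim_bound[OF bs, of 1] by eventually_elim (auto intro: tendsto_power)
    show "AE \<omega> in M. norm ((XK b K 1 \<omega>)^2) \<le> (\<Sum>j. \<bar>b j\<bar>) * W b 1 \<omega>" for K
      using XK_lim_bound[OF bs, of 1] by eventually_elim auto
  qed measurable
  then show ?thesis unfolding EXK2_eq .
qed

lemma Xf_mean0:
  assumes bs: "summable (\<lambda>j. \<bar>b j\<bar>)"
  shows "integral\<^sup>L M (Xf b t) = 0"
proof -
  have E0: "integral\<^sup>L M (XK b K t) = 0" for K
    unfolding XK_def[abs_def] by (simp add: int1 mean0)
  have "(\<lambda>K. integral\<^sup>L M (XK b K t)) \<longlonglongrightarrow> integral\<^sup>L M (Xf b t)"
  proof (rule integral_dominated_convergence[where w="\<lambda>\<omega>. 1 + (\<Sum>j. \<bar>b j\<bar>) * W b t \<omega>"])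
    show "integrable M (\<lambda>\<omega>. 1 + (\<Sum>j. \<bar>b j\<bar>) * W b t \<omega>)" using W_int(1)[OF bs] by simp
    show "AE \<omega> in M. (\<lambda>K. XK b K t \<omega>) \<longlonglongrightarrow> Xf b t \<omega>"
      using XK_lim_bound[OF bs, of t] by eventually_elim auto
    show "AE \<omega> in M. norm (XK b K t \<omega>) \<le> 1 + (\<Sum>j. \<bar>b j\<bar>) * W b t \<omega>" for K
      using XK_lim_bound[OF bs, of t]
    proof eventually_elim
      case (elim \<omega>)
      have "\<bar>XK b K t \<omega>\<bar> \<le> 1 + (XK b K t \<omega>)^2" using abs_mult_le_sq[of "XK b K t \<omega>" 1] by simp
      moreover have "(XK b K t \<omega>)^2 \<le> (\<Sum>j. \<bar>b j\<bar>) * W b t \<omega>" using elim by blast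
      ultimately show ?case by simp
    qed
  qed measurable
  then show ?thesis unfolding E0 using LIMSEQ_unique tendsto_const by metis
qed

lemma Xf_variance:
  assumes bs: "summable (\<lambda>j. \<bar>b j\<bar>)"
  shows "variance (Xf b 1) = integral\<^sup>L M (\<lambda>\<omega>. (Xf b 1 \<omega>)^2)"
  using Xf_mean0[OF bs, of 1] by simp

end

context Uproc
begin

lemma meas_gh:
  assumes n: "n \<ge> 1" and F[measurable]: "\<And>t. F t \<in> borel_measurable M"
  shows "(\<lambda>\<omega>. gamma_hat n (\<lambda>t. F t \<omega>)) \<in> borel_measurable M"
  unfolding gamma_hat_eq[OF n] by measurable

lemma GK_le:
  assumes bs: "summable (\<lambda>j. \<bar>b j\<bar>)"
  shows "\<bar>GK b K 0 0\<bar> \<le> (\<Sum>j. \<bar>b j\<bar>) * ((\<Sum>j. \<bar>b j\<bar>) * gU 0)"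
proof -
  have "0 \<le> GK b K 0 0" unfolding EXK2_eq by (rule integral_nonneg_AE) simp
  moreover have "GK b K 0 0 \<le> integral\<^sup>L M (\<lambda>\<omega>. (\<Sum>j. \<bar>b j\<bar>) * W b 1 \<omega>)"
    unfolding EXK2_eq
  proof (rule integral_mono_AE)
    show "integrable M (\<lambda>\<omega>. (XK b K 1 \<omega>)^2)" using int_XK2[of b K 1 1] by (simp add: power2_eq_square)
    show "integrable M (\<lambda>\<omega>. (\<Sum>j. \<bar>b j\<bar>) * W b 1 \<omega>)" using W_int(1)[OF bs] by simp
    show "AE \<omega> in M. (XK b K 1 \<omega>)^2 \<le> (\<Sum>j. \<bar>b j\<bar>) * W b 1 \<omega>"
      using XK_lim_bound[OF bs, of 1] by eventually_elim auto
  qed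
  moreover have "integral\<^sup>L M (\<lambda>\<omega>. (\<Sum>j. \<bar>b j\<bar>) * W b 1 \<omega>) = (\<Sum>j. \<bar>b j\<bar>) * ((\<Sum>j. \<bar>b j\<bar>) * gU 0)"
    using W_int(2)[OF bs] by simp
  ultimately show ?thesis by linarith
qed

lemma main_bound:
  assumes bs: "summable (\<lambda>j. \<bar>b j\<bar>)" and n: "n \<ge> 1" and a: "a > 0"
    and gmax: "\<And>h. \<bar>gU h\<bar> \<le> Gs"
    and gsum: "\<And>c. (\<Sum>t\<in>{1..int n}. \<bar>gU (t + c)\<bar>) \<le> Gs"
    and ksum: "\<And>h c2 c3. (\<Sum>t\<in>{1..int n}. \<bar>kap h (t + c2) (t + c3)\<bar>) \<le> Ks"
  shows "integrable M (\<lambda>\<omega>. \<bar>gamma_hat n (\<lambda>t. Xf b t \<omega>) - integral\<^sup>L M (\<lambda>\<omega>. (Xf b 1 \<omega>)^2)\<bar>)"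
    and "integral\<^sup>L M (\<lambda>\<omega>. \<bar>gamma_hat n (\<lambda>t. Xf b t \<omega>) - integral\<^sup>L M (\<lambda>\<omega>. (Xf b 1 \<omega>)^2)\<bar>)
      \<le> (\<Sum>j. \<bar>b j\<bar>)^4 * (Ks + 2 * Gs^2) / (2 * a * real n) + a / 2 + 2 * (\<Sum>j. \<bar>b j\<bar>)^2 * Gs / real n"
proof -
  let ?I = "{1..int n}" and ?Bd = "\<Sum>j. \<bar>b j\<bar>" and ?v = "integral\<^sup>L M (\<lambda>\<omega>. (Xf b 1 \<omega>)^2)"
  define s where "s = (\<lambda>K \<omega>. \<bar>gamma_hat n (\<lambda>t. XK b K t \<omega>) - GK b K 0 0\<bar>)"
  define f where "f = (\<lambda>\<omega>. \<bar>gamma_hat n (\<lambda>t. Xf b t \<omega>) - ?v\<bar>)"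
  define w where "w = (\<lambda>\<omega>. 3 * ((\<Sum>t\<in>?I. ?Bd * W b t \<omega>) / real n) + ?Bd * (?Bd * gU 0))"
  have AEall: "AE \<omega> in M. \<forall>t\<in>?I. (\<lambda>K. XK b K t \<omega>) \<longlonglongrightarrow> Xf b t \<omega> \<and> (\<forall>K. (XK b K t \<omega>)^2 \<le> ?Bd * W b t \<omega>)"
    by (rule AE_finite_allI, simp, rule XK_lim_bound[OF bs])
  have smeas: "s K \<in> borel_measurable M" for K
    unfolding s_def by (intro borel_measurable_abs borel_measurable_diff meas_gh[OF n] XK_meas) simp
  have fmeas: "f \<in> borel_measurable M"
    unfolding f_def by (intro borel_measurable_abs borel_measurable_diff meas_gh[OF n] Xf_meas) simp
  have wint: "integrable M w" unfolding w_def using W_int(1)[OF bs] by simp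
  have conv: "AE \<omega> in M. (\<lambda>K. s K \<omega>) \<longlonglongrightarrow> f \<omega>"
      using AEall
    proof eventually_elim
      case (elim \<omega>)
      have h: "(\<lambda>K. XK b K t \<omega>) \<longlonglongrightarrow> Xf b t \<omega>" if "t \<in> ?I" for t using elim that by blast
      have t3: "(\<lambda>K. (if even n then ((\<Sum>t\<in>?I. (-1) ^ nat t * XK b K t \<omega>) / real n)^2 else 0))
         \<longlonglongrightarrow> (if even n then ((\<Sum>t\<in>?I. (-1) ^ nat t * Xf b t \<omega>) / real n)^2 else 0)"
        using n by (cases "even n") (simp_all, intro tendsto_intros h, simp_all)
      have "(\<lambda>K. (\<Sum>t\<in>?I. (XK b K t \<omega>)^2) / real n - ((\<Sum>t\<in>?I. XK b K t \<omega>) / real n)^2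
          + (if even n then ((\<Sum>t\<in>?I. (-1) ^ nat t * XK b K t \<omega>) / real n)^2 else 0) - GK b K 0 0)
        \<longlonglongrightarrow> (\<Sum>t\<in>?I. (Xf b t \<omega>)^2) / real n - ((\<Sum>t\<in>?I. Xf b t \<omega>) / real n)^2
          + (if even n then ((\<Sum>t\<in>?I. (-1) ^ nat t * Xf b t \<omega>) / real n)^2 else 0) - ?v"
        by (intro tendsto_diff tendsto_add t3 v_lim[OF bs] tendsto_divide tendsto_const tendsto_sum tendsto_power h)
          (use n in auto)
      then show ?case unfolding s_def f_def gamma_hat_eq[OF n] by (rule tendsto_rabs)
    qed
  have bnd: "AE \<omega> in M. norm (s K \<omega>) \<le> w \<omega>" for K
      using AEall
    proof eventually_elim
      case (elim \<omega>)
      have "\<bar>gamma_hat n (\<lambda>t. XK b K t \<omega>)\<bar> \<le> 3 * ((\<Sum>t\<in>?I. (XK b K t \<omega>)^2) / real n)"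
        by (rule gamma_hat_abs_bound[OF n])
      also have "\<dots> \<le> 3 * ((\<Sum>t\<in>?I. ?Bd * W b t \<omega>) / real n)"
        using elim by (intro mult_left_mono divide_right_mono sum_mono) auto
      finally have "\<bar>gamma_hat n (\<lambda>t. XK b K t \<omega>)\<bar> \<le> 3 * ((\<Sum>t\<in>?I. ?Bd * W b t \<omega>) / real n)" .
      then show ?case unfolding s_def w_def using GK_le[OF bs, of K] by simp
    qed
  note lim = integral_dominated_convergence[OF fmeas smeas wint conv bnd]
  have Gs0: "0 \<le> Gs" using gmax[of 0] by simp
  have Ks0: "0 \<le> Ks" using ksum[of 0 0 0] by (meson order_trans sum_nonneg abs_ge_zero)
  have Bk: "(\<Sum>i<K. \<bar>b i\<bar>) \<le> ?Bd" for K by (rule sum_le_suminf[OF bs]) auto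
  have bndK: "integral\<^sup>L M (s K) \<le> ?Bd^4 * (Ks + 2 * Gs^2) / (2 * a * real n) + a / 2 + 2 * ?Bd^2 * Gs / real n" for K
  proof -
    have "integral\<^sup>L M (s K) \<le> (\<Sum>i<K. \<bar>b i\<bar>)^4 * (Ks + 2 * Gs^2) / (2 * a * real n) + a / 2 + 2 * (\<Sum>i<K. \<bar>b i\<bar>)^2 * Gs / real n"
      unfolding s_def by (rule finite_bound(2)[OF n a gmax gsum ksum])
    also have "\<dots> \<le> ?Bd^4 * (Ks + 2 * Gs^2) / (2 * a * real n) + a / 2 + 2 * ?Bd^2 * Gs / real n"
      using a n Gs0 Ks0 Bk[of K]
      by (intro add_mono divide_right_mono mult_right_mono mult_left_mono power_mono) (auto intro: sum_nonneg)
    finally show ?thesis .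
  qed
  show "integrable M (\<lambda>\<omega>. \<bar>gamma_hat n (\<lambda>t. Xf b t \<omega>) - ?v\<bar>)"
    using integrable_dominated_convergence[OF fmeas smeas wint conv bnd] unfolding f_def by blast
  show "integral\<^sup>L M (\<lambda>\<omega>. \<bar>gamma_hat n (\<lambda>t. Xf b t \<omega>) - ?v\<bar>)
      \<le> ?Bd^4 * (Ks + 2 * Gs^2) / (2 * a * real n) + a / 2 + 2 * ?Bd^2 * Gs / real n"
    using LIMSEQ_le_const2[OF lim] bndK unfolding f_def by blast
qed

end

lemma trig_pair: "1 - \<bar>cos (l::real)\<bar> \<le> (sin (x::real))^2 + (sin (x + l))^2"
proof -
  define X Y C S where "X = sin x" "Y = cos x" "C = cos l" "S = sin l"
  have XY: "X^2 + Y^2 = 1" unfolding X_Y_C_S_def by simp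
  have CS: "C^2 + S^2 = 1" unfolding X_Y_C_S_def by (metis sin_cos_squared_add add.commute)
  have sx: "sin (x + l) = X * C + Y * S" unfolding X_Y_C_S_def sin_add by simp
  define D where "D = X^2 + (X * C + Y * S)^2"
  show ?thesis
  proof (cases "C \<ge> 0")
    case True
    have id: "(1 + C) * (D - (1 - C) * (X^2 + Y^2)) = C * ((1 + C) * X + S * Y)^2 + Y^2 * (C^2 + S^2 - 1)"
      unfolding D_def by algebra
    have "(1 + C) * (D - (1 - C) * (X^2 + Y^2)) \<ge> 0" unfolding id using CS True by simp
    moreover have "1 + C > 0" using True by simp
    ultimately have "D - (1 - C) * (X^2 + Y^2) \<ge> 0" by (simp add: zero_le_mult_iff)
    then show ?thesis using XY True unfolding D_def sx by (simp add: X_Y_C_S_def)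
  next
    case False
    have id: "(1 - C) * (D - (1 + C) * (X^2 + Y^2)) = - C * ((1 - C) * X - S * Y)^2 + Y^2 * (C^2 + S^2 - 1)"
      unfolding D_def by algebra
    have "(1 - C) * (D - (1 + C) * (X^2 + Y^2)) \<ge> 0" unfolding id using CS False by (simp add: mult_le_0_iff)
    moreover have "1 - C > 0" using False by simp
    ultimately have "D - (1 + C) * (X^2 + Y^2) \<ge> 0" by (simp add: zero_le_mult_iff)
    then show ?thesis using XY False unfolding D_def sx by (simp add: X_Y_C_S_def)
  qed
qed

lemma sum_pairs: "(\<Sum>j<2*(M::nat). f j) = (\<Sum>m<M. f (2*m) + f (2*m+1) :: real)"
  by (induction M) (simp_all add: add.assoc)

lemma coeff_props:
  fixes lam0 d :: real
  assumes l: "0 < lam0" "lam0 < pi" and d: "0 < d" "d < 1"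
  defines "b \<equiv> inv_filter_coeff lam0 d"
  shows "\<And>j. \<bar>b j\<bar> \<le> (1 - d)^j / sin lam0"
    and "summable (\<lambda>j. \<bar>b j\<bar>)"
    and "(\<Sum>j. \<bar>b j\<bar>) \<le> 1 / (d * sin lam0)"
    and "\<exists>K. (1 - d)^2 * (1 - \<bar>cos lam0\<bar>) / (8 * d * (sin lam0)^2) \<le> (\<Sum>j<K. (b j)^2)"
proof -
  have s0: "sin lam0 > 0" using l by (simp add: sin_gt_zero)
  let ?r = "1 - d"
  have r: "0 < ?r" "?r < 1" using d by auto
  have bj: "b j = ?r^j * sin (real (j+1) * lam0) / sin lam0" for j
    unfolding b_def using s0 by (simp add: inv_coeff_closed)
  show bb: "\<bar>b j\<bar> \<le> ?r^j / sin lam0" for j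
  proof -
    have "\<bar>b j\<bar> = ?r^j * \<bar>sin (real (j+1) * lam0)\<bar> / sin lam0" using r s0 by (simp add: bj abs_mult)
    also have "\<dots> \<le> ?r^j * 1 / sin lam0" using r s0 by (intro divide_right_mono mult_left_mono) auto
    finally show ?thesis by simp
  qed
  have sg: "summable (\<lambda>j. ?r^j / sin lam0)" using r by (intro summable_divide summable_geometric) simp
  show bs: "summable (\<lambda>j. \<bar>b j\<bar>)"
    by (rule summable_comparison_test'[OF sg, where N=0]) (use bb in simp)
  have "(\<Sum>j. \<bar>b j\<bar>) \<le> (\<Sum>j. ?r^j / sin lam0)" by (rule suminf_le[OF bb bs sg])
  also have "\<dots> = (\<Sum>j. ?r^j) / sin lam0" using r by (intro suminf_divide summable_geometric) simp
  also have "\<dots> = 1 / (d * sin lam0)" using r by (simp add: suminf_geometric)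
  finally show "(\<Sum>j. \<bar>b j\<bar>) \<le> 1 / (d * sin lam0)" .
  let ?c = "1 - \<bar>cos lam0\<bar>"
  have c0: "0 \<le> ?c" by simp
  obtain M where M: "(?r^4)^M < 1/2" using real_arch_pow_inv[of "1/2" "?r^4"] r by (auto simp: power_less_one_iff)
  have pair: "?r^((2*m+1)*2) * ?c / (sin lam0)^2 \<le> (b (2*m))^2 + (b (2*m+1))^2" for m
  proof -
    have e1: "(b (2*m))^2 = ?r^((2*m)*2) * (sin (real (2*m+1) * lam0))^2 / (sin lam0)^2"
      unfolding bj by (simp add: power_mult_distrib power_divide flip: power_mult)
    have a: "b (2*m+1) = ?r^(2*m+1) * sin (real (2*m+1) * lam0 + lam0) / sin lam0"
    proof -
      have "real (2*m+1+1) * lam0 = real (2*m+1) * lam0 + lam0" by (simp add: algebra_simps)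
      then show ?thesis by (simp only: bj)
    qed
    have e2: "(b (2*m+1))^2 = ?r^((2*m+1)*2) * (sin (real (2*m+1) * lam0 + lam0))^2 / (sin lam0)^2"
      unfolding a by (simp only: power_mult_distrib power_divide power_mult)
    have "?r^((2*m+1)*2) * (sin (real (2*m+1) * lam0))^2 \<le> ?r^((2*m)*2) * (sin (real (2*m+1) * lam0))^2"
      using r by (intro mult_right_mono power_decreasing) auto
    moreover have "?r^((2*m+1)*2) * ?c \<le> ?r^((2*m+1)*2) * ((sin (real (2*m+1) * lam0))^2 + (sin (real (2*m+1) * lam0 + lam0))^2)"
      using r by (intro mult_left_mono trig_pair) auto
    ultimately have "?r^((2*m+1)*2) * ?c \<le> ?r^((2*m)*2) * (sin (real (2*m+1) * lam0))^2 + ?r^((2*m+1)*2) * (sin (real (2*m+1) * lam0 + lam0))^2"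
      by (simp add: algebra_simps)
    then show ?thesis unfolding e1 e2 using s0 by (simp add: add_divide_distrib[symmetric] divide_right_mono)
  qed
  have "(\<Sum>m<M. ?r^((2*m+1)*2) * ?c / (sin lam0)^2) \<le> (\<Sum>j<2*M. (b j)^2)"
    unfolding sum_pairs by (intro sum_mono pair)
  moreover have "(\<Sum>m<M. ?r^((2*m+1)*2) * ?c / (sin lam0)^2) = ?r^2 * ?c / (sin lam0)^2 * (\<Sum>m<M. (?r^4)^m)"
  proof -
    have "?r^((2*m+1)*2) = ?r^2 * (?r^4)^m" for m
    proof -
      have "?r^((2*m+1)*2) = ?r^(2 + 4*m)" by (rule arg_cong[where f="\<lambda>k. ?r^k"]) simp
      also have "\<dots> = ?r^2 * (?r^4)^m" by (simp only: power_add power_mult)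
      finally show ?thesis .
    qed
    then show ?thesis by (simp add: sum_distrib_left sum_divide_distrib mult_ac)
  qed
  moreover have "(\<Sum>m<M. (?r^4)^m) = (1 - (?r^4)^M) / (1 - ?r^4)"
  proof -
    have "?r^4 < 1" using r by (simp add: power_less_one_iff)
    then show ?thesis by (simp add: sum_gp_strict)
  qed
  moreover have "1 / (8 * d) \<le> (1 - (?r^4)^M) / (1 - ?r^4)"
  proof -
    have r4: "0 < 1 - ?r^4" using r by (simp add: power_less_one_iff)
    have "1 - ?r^4 = d * (1 + ?r) * (1 + ?r^2)" by (simp add: algebra_simps power2_eq_square power4_eq_xxxx)
    also have "\<dots> \<le> d * 2 * 2" using r d by (intro mult_mono) (auto simp: power_le_one)
    finally have "1 - ?r^4 \<le> 4 * d" by simp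
    then have "(1 - ?r^4) / 2 \<le> 4 * d * (1/2)" by simp
    also have "4 * d * (1/2) \<le> 4 * d * (1 - (?r^4)^M)" using M d by (intro mult_left_mono) auto
    finally have "(1 - ?r^4) / 2 \<le> 4 * d * (1 - (?r^4)^M)" .
    then show ?thesis using r4 d by (simp add: field_simps)
  qed
  ultimately have "?r^2 * ?c / (sin lam0)^2 * (1 / (8 * d)) \<le> (\<Sum>j<2*M. (b j)^2)"
    by (smt (verit) c0 mult_left_mono zero_le_divide_iff zero_le_mult_iff zero_le_power2)
  then show "\<exists>K. ?r^2 * ?c / (8 * d * (sin lam0)^2) \<le> (\<Sum>j<K. (b j)^2)"
    by (intro exI[of _ "2*M"]) (simp add: field_simps)
qed

lemma gsum_facts:
  fixes g :: "int \<Rightarrow> real"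
  assumes s: "(\<lambda>h. \<bar>real_of_int h\<bar> * \<bar>g h\<bar>) summable_on UNIV"
  shows "(\<lambda>h. \<bar>g h\<bar>) summable_on UNIV"
    and "\<And>h. \<bar>g h\<bar> \<le> infsum (\<lambda>h. \<bar>g h\<bar>) UNIV"
    and "\<And>c n. (\<Sum>t\<in>{1..int n}. \<bar>g (t + c)\<bar>) \<le> infsum (\<lambda>h. \<bar>g h\<bar>) UNIV"
proof -
  have s1: "(\<lambda>h. \<bar>real_of_int h\<bar> * \<bar>g h\<bar>) summable_on (UNIV - {0})"
    using s by (rule summable_on_subset) simp
  have s2: "(\<lambda>h. \<bar>g h\<bar>) summable_on (UNIV - {0})"
  proof (rule summable_on_comparison_test[OF s1])
    fix h :: int assume "h \<in> UNIV - {0}"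
    then have "h \<noteq> 0" by simp
    then have "1 \<le> \<bar>h\<bar>" by linarith
    then have "1 \<le> \<bar>real_of_int h\<bar>" by (metis of_int_1_le_iff of_int_abs)
    then show "\<bar>g h\<bar> \<le> \<bar>real_of_int h\<bar> * \<bar>g h\<bar>" using mult_right_mono[of 1 "\<bar>real_of_int h\<bar>" "\<bar>g h\<bar>"] by simp
  qed simp
  have s3: "(\<lambda>h. \<bar>g h\<bar>) summable_on {0}" by simp
  have "(\<lambda>h. \<bar>g h\<bar>) summable_on ((UNIV - {0}) \<union> {0})" by (rule summable_on_union[OF s2 s3])
  then show S: "(\<lambda>h. \<bar>g h\<bar>) summable_on UNIV" by simp
  show "\<bar>g h\<bar> \<le> infsum (\<lambda>h. \<bar>g h\<bar>) UNIV" for h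
    using finite_sum_le_infsum[OF S, of "{h}"] by simp
  show "(\<Sum>t\<in>{1..int n}. \<bar>g (t + c)\<bar>) \<le> infsum (\<lambda>h. \<bar>g h\<bar>) UNIV" for c n
  proof -
    have "(\<Sum>t\<in>{1..int n}. \<bar>g (t + c)\<bar>) = (\<Sum>h\<in>(\<lambda>t. t + c) ` {1..int n}. \<bar>g h\<bar>)"
      by (subst sum.reindex) (auto simp: inj_on_def)
    also have "\<dots> \<le> infsum (\<lambda>h. \<bar>g h\<bar>) UNIV"
      by (rule finite_sum_le_infsum[OF S]) auto
    finally show ?thesis .
  qed
qed

lemma ksum_facts:
  fixes k :: "int \<Rightarrow> int \<Rightarrow> int \<Rightarrow> real"
  assumes s: "(\<lambda>(h1, h2, h3). (1 + \<bar>real_of_int h1\<bar> + \<bar>real_of_int h2\<bar> + \<bar>real_of_int h3\<bar>) * \<bar>k h1 h2 h3\<bar>) summable_on UNIV"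
  shows "\<And>h c2 c3 n. (\<Sum>t\<in>{1..int n}. \<bar>k h (t + c2) (t + c3)\<bar>) \<le> infsum (\<lambda>(h1, h2, h3). \<bar>k h1 h2 h3\<bar>) UNIV"
proof -
  have S: "(\<lambda>(h1, h2, h3). \<bar>k h1 h2 h3\<bar>) summable_on UNIV"
  proof (rule summable_on_comparison_test[OF s])
    fix x :: "int \<times> int \<times> int"
    obtain h1 h2 h3 where x: "x = (h1, h2, h3)" by (cases x) auto
    have "1 \<le> 1 + \<bar>real_of_int h1\<bar> + \<bar>real_of_int h2\<bar> + \<bar>real_of_int h3\<bar>" by simp
    then have "\<bar>k h1 h2 h3\<bar> \<le> (1 + \<bar>real_of_int h1\<bar> + \<bar>real_of_int h2\<bar> + \<bar>real_of_int h3\<bar>) * \<bar>k h1 h2 h3\<bar>"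
      using mult_right_mono[of 1 _ "\<bar>k h1 h2 h3\<bar>"] by simp
    then show "(case x of (h1, h2, h3) \<Rightarrow> \<bar>k h1 h2 h3\<bar>) \<le> (case x of (h1, h2, h3) \<Rightarrow> (1 + \<bar>real_of_int h1\<bar> + \<bar>real_of_int h2\<bar> + \<bar>real_of_int h3\<bar>) * \<bar>k h1 h2 h3\<bar>)"
      unfolding x by simp
    show "0 \<le> (case x of (h1, h2, h3) \<Rightarrow> \<bar>k h1 h2 h3\<bar>)" unfolding x by simp
  qed
  show "(\<Sum>t\<in>{1..int n}. \<bar>k h (t + c2) (t + c3)\<bar>) \<le> infsum (\<lambda>(h1, h2, h3). \<bar>k h1 h2 h3\<bar>) UNIV" for h c2 c3 n
  proof -
    have "(\<Sum>t\<in>{1..int n}. \<bar>k h (t + c2) (t + c3)\<bar>) = (\<Sum>x\<in>(\<lambda>t. (h, t + c2, t + c3)) ` {1..int n}. (\<lambda>(h1, h2, h3). \<bar>k h1 h2 h3\<bar>) x)"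
      by (subst sum.reindex) (auto simp: inj_on_def)
    also have "\<dots> \<le> infsum (\<lambda>(h1, h2, h3). \<bar>k h1 h2 h3\<bar>) UNIV"
      by (rule finite_sum_le_infsum[OF S]) auto
    finally show ?thesis .
  qed
qed

lemma final_arith:
  fixes Bd B0 v V d D Gs \<eta> \<epsilon> E n :: real
  assumes d: "0 < d" "d \<le> 1" and n: "1 \<le> n" and V: "0 < V" and v: "V / d \<le> v"
   and B: "0 \<le> Bd" "Bd \<le> B0 / d" and D: "0 \<le> D" and G: "0 \<le> Gs" and eta: "0 < \<eta>" and eps: "0 < \<epsilon>"
   and E: "E \<le> Bd^4 * D / (2 * (\<eta> * v) * n) + \<eta> * v / 2 + 2 * Bd^2 * Gs / n"
  shows "E / (\<epsilon> * v) \<le> (B0^4 * D / (2 * \<eta> * \<epsilon> * V^2) + 2 * B0^2 * Gs / (\<epsilon> * V)) * (1 / (n * d^2)) + \<eta> / (2 * \<epsilon>)"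
proof -
  have Vd: "0 < V / d" using V d by simp
  have v0: "0 < v" using Vd v by linarith
  have B0: "0 \<le> B0 / d" using B by linarith
  have Vdv: "V \<le> d * v" using v d by (simp add: field_simps)
  have iv: "1 / v \<le> d / V" using Vdv v0 V by (simp add: divide_simps mult.commute)
  have iv0: "0 \<le> 1 / v" using v0 by simp
  have B4: "Bd^4 \<le> (B0 / d)^4" by (rule power_mono[OF B(2) B(1)])
  have B2: "Bd^2 \<le> (B0 / d)^2" by (rule power_mono[OF B(2) B(1)])
  have "E / (\<epsilon> * v) \<le> (Bd^4 * D / (2 * (\<eta> * v) * n) + \<eta> * v / 2 + 2 * Bd^2 * Gs / n) / (\<epsilon> * v)"
    using E v0 eps by (intro divide_right_mono) auto
  also have "\<dots> = Bd^4 * (1 / v)^2 * (D / (2 * \<eta> * \<epsilon> * n)) + \<eta> / (2 * \<epsilon>) + Bd^2 * (1 / v) * (2 * Gs / (\<epsilon> * n))"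
    using v0 eps eta n by (simp add: field_simps power2_eq_square)
  also have "\<dots> \<le> (B0 / d)^4 * (d / V)^2 * (D / (2 * \<eta> * \<epsilon> * n)) + \<eta> / (2 * \<epsilon>) + (B0 / d)^2 * (d / V) * (2 * Gs / (\<epsilon> * n))"
  proof (intro add_mono mult_right_mono mult_mono power_mono B4 B2 iv iv0 order_refl)
  qed (use D G eps eta n d V iv0 B in auto)
  also have "(B0 / d)^4 * (d / V)^2 * (D / (2 * \<eta> * \<epsilon> * n)) = B0^4 * D / (2 * \<eta> * \<epsilon> * V^2) * (1 / (n * d^2))"
    using d V by (simp add: field_simps power2_eq_square power4_eq_xxxx)
  also have "(B0 / d)^2 * (d / V) * (2 * Gs / (\<epsilon> * n)) = 2 * B0^2 * Gs / (\<epsilon> * V) * (d / (n * d^2))"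
    using d V by (simp add: field_simps power2_eq_square)
  also have "\<dots> \<le> 2 * B0^2 * Gs / (\<epsilon> * V) * (1 / (n * d^2))"
    using d n G eps V by (intro mult_left_mono divide_right_mono) auto
  finally show ?thesis by (simp add: algebra_simps)
qed

context Uproc
begin

lemma per_n_bound:
  fixes lam0 d \<epsilon> \<eta> m Gs Ks :: real and n :: nat and fU :: "real \<Rightarrow> real"
  assumes l: "0 < lam0" "lam0 < pi" and d: "0 < d" "d \<le> 1/2" and n: "n \<ge> 1"
    and spec: "\<And>h. ((\<lambda>lam. exp (\<i> * complex_of_real (real_of_int h * lam)) * complex_of_real (fU lam))
                    has_integral complex_of_real (gU h)) {-pi..pi}"
    and fmin: "\<And>lam. lam \<in> {-pi..pi} \<Longrightarrow> m \<le> fU lam" and m0: "0 < m"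
    and gmax: "\<And>h. \<bar>gU h\<bar> \<le> Gs"
    and gsum: "\<And>c. (\<Sum>t\<in>{1..int n}. \<bar>gU (t + c)\<bar>) \<le> Gs"
    and ksum: "\<And>h c2 c3. (\<Sum>t\<in>{1..int n}. \<bar>kap h (t + c2) (t + c3)\<bar>) \<le> Ks"
    and eps: "0 < \<epsilon>" and eta: "0 < \<eta>"
  shows "measure M {\<omega> \<in> space M. \<bar>gamma_hat n (\<lambda>t. filtered lam0 d U t \<omega>) / variance (filtered lam0 d U 1) - 1\<bar> > \<epsilon>}
     \<le> ((1 / sin lam0)^4 * (Ks + 2 * Gs^2) / (2 * \<eta> * \<epsilon> * (2 * pi * m * (1 - \<bar>cos lam0\<bar>) / (32 * (sin lam0)^2))^2)
         + 2 * (1 / sin lam0)^2 * Gs / (\<epsilon> * (2 * pi * m * (1 - \<bar>cos lam0\<bar>) / (32 * (sin lam0)^2)))) * (1 / (real n * d^2))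
       + \<eta> / (2 * \<epsilon>)"
proof -
  define b where "b = inv_filter_coeff lam0 d"
  define s0 where "s0 = sin lam0"
  define cL where "cL = 1 - \<bar>cos lam0\<bar>"
  define V where "V = 2 * pi * m * cL / (32 * s0^2)"
  have s0: "0 < s0" using l by (simp add: s0_def sin_gt_zero)
  have cL: "0 < cL"
  proof -
    have "(cos lam0)^2 < 1" using s0 sin_cos_squared_add[of lam0] unfolding s0_def by (smt (verit) zero_less_power2)
    then have "\<bar>cos lam0\<bar> < 1" by (simp add: abs_square_less_1)
    then show ?thesis unfolding cL_def by simp
  qed
  have V: "0 < V" unfolding V_def using m0 cL s0 by simp
  have d1: "d < 1" using d by simp
  note cp = coeff_props[OF l d(1) d1, folded b_def]
  have bs: "summable (\<lambda>j. \<bar>b j\<bar>)" by (rule cp(2))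
  have filt: "filtered lam0 d U t = Xf b t" for t by (rule ext) (simp add: filtered_def Xf_def b_def)
  define v where "v = integral\<^sup>L M (\<lambda>\<omega>. (Xf b 1 \<omega>)^2)"
  have var: "variance (filtered lam0 d U 1) = v" unfolding filt v_def by (rule Xf_variance[OF bs])
  obtain K0 where K0: "(1 - d)^2 * cL / (8 * d * s0^2) \<le> (\<Sum>j<K0. (b j)^2)"
    using cp(4) unfolding cL_def s0_def by blast
  have GKlow: "2 * pi * m * (\<Sum>j<K0. (b j)^2) \<le> GK b K 0 0" if "K \<ge> K0" for K
  proof -
    have "(\<Sum>j<K0. (b j)^2) \<le> (\<Sum>j<K. (b j)^2)" using that by (intro sum_mono2) auto
    then have "2 * pi * m * (\<Sum>j<K0. (b j)^2) \<le> 2 * pi * m * (\<Sum>j<K. (b j)^2)" using m0 by simp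
    also have "\<dots> \<le> (\<Sum>i<K. \<Sum>j<K. b i * b j * gU (int i - int j))" by (rule spec_lower[OF spec fmin])
    also have "\<dots> = GK b K 0 0" unfolding GK_def by simp
    finally show ?thesis .
  qed
  have vlow0: "2 * pi * m * (\<Sum>j<K0. (b j)^2) \<le> v"
    unfolding v_def by (rule LIMSEQ_le_const[OF v_lim[OF bs]]) (use GKlow in blast)
  have "V / d = 2 * pi * m * ((1/4) * cL / (8 * d * s0^2))" unfolding V_def using d s0 by (simp add: field_simps)
  also have "\<dots> \<le> 2 * pi * m * ((1 - d)^2 * cL / (8 * d * s0^2))"
  proof -
    have "1/2 \<le> 1 - d" using d by simp
    then have "(1/2)^2 \<le> (1 - d)^2" by (rule power_mono) simp
    then have "1/4 \<le> (1 - d)^2" by (simp add: power2_eq_square)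
    then have "(1/4) * cL / (8 * d * s0^2) \<le> (1 - d)^2 * cL / (8 * d * s0^2)"
      using cL d s0 by (intro divide_right_mono mult_right_mono) auto
    moreover have "0 \<le> 2 * pi * m" using m0 by simp
    ultimately show ?thesis by (rule mult_left_mono)
  qed
  also have "\<dots> \<le> 2 * pi * m * (\<Sum>j<K0. (b j)^2)" using K0 m0 by (intro mult_left_mono) auto
  also have "\<dots> \<le> v" by (rule vlow0)
  finally have vlow: "V / d \<le> v" .
  have v0: "0 < v" using vlow V d by (smt (verit) divide_pos_pos)
  define a where "a = \<eta> * v"
  have a: "0 < a" unfolding a_def using eta v0 by simp
  have Ks0: "0 \<le> Ks"
  proof -
    have "0 \<le> (\<Sum>t\<in>{1..int n}. \<bar>kap 0 (t + 0) (t + 0)\<bar>)" by (rule sum_nonneg) simp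
    then show ?thesis using ksum[of 0 0 0] by linarith
  qed
  have D0: "0 \<le> Ks + 2 * Gs^2" using Ks0 by simp
  have Gs0: "0 \<le> Gs" using gmax[of 0] by simp
  let ?S = "\<lambda>\<omega>. gamma_hat n (\<lambda>t. Xf b t \<omega>)"
  note mb = main_bound[OF bs n a gmax gsum ksum, folded v_def]
  have sub: "{\<omega> \<in> space M. \<bar>gamma_hat n (\<lambda>t. filtered lam0 d U t \<omega>) / variance (filtered lam0 d U 1) - 1\<bar> > \<epsilon>}
      \<subseteq> {\<omega> \<in> space M. \<bar>?S \<omega> - v\<bar> \<ge> \<epsilon> * v}"
  proof safe
    fix \<omega> assume "\<omega> \<in> space M" and h: "\<epsilon> < \<bar>gamma_hat n (\<lambda>t. filtered lam0 d U t \<omega>) / variance (filtered lam0 d U 1) - 1\<bar>"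
    have var': "variance (Xf b 1) = v" using var unfolding filt .
    have h': "\<bar>?S \<omega> / v - 1\<bar> > \<epsilon>" using h unfolding filt var' .
    have e1: "?S \<omega> / v - 1 = (?S \<omega> - v) / v" using v0 by (simp add: diff_divide_distrib)
    have e2: "\<bar>(?S \<omega> - v) / v\<bar> = \<bar>?S \<omega> - v\<bar> / v" using v0 by simp
    have "\<epsilon> < \<bar>?S \<omega> - v\<bar> / v" using h' unfolding e1 e2 .
    then have "\<epsilon> * v < \<bar>?S \<omega> - v\<bar>" using v0 by (simp add: pos_less_divide_eq)
    then show "\<epsilon> * v \<le> \<bar>?S \<omega> - v\<bar>" by simp
  qed
  have measS: "{\<omega> \<in> space M. \<bar>?S \<omega> - v\<bar> \<ge> \<epsilon> * v} \<in> sets M"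
  proof -
    have "(\<lambda>\<omega>. \<bar>?S \<omega> - v\<bar>) \<in> borel_measurable M"
      by (intro borel_measurable_abs borel_measurable_diff meas_gh[OF n] Xf_meas) simp
    then show ?thesis by measurable
  qed
  have "measure M {\<omega> \<in> space M. \<bar>gamma_hat n (\<lambda>t. filtered lam0 d U t \<omega>) / variance (filtered lam0 d U 1) - 1\<bar> > \<epsilon>}
      \<le> measure M {\<omega> \<in> space M. \<bar>?S \<omega> - v\<bar> \<ge> \<epsilon> * v}"
    by (rule finite_measure_mono[OF sub measS])
  also have "\<dots> \<le> integral\<^sup>L M (\<lambda>\<omega>. \<bar>?S \<omega> - v\<bar>) / (\<epsilon> * v)"
    by (rule integral_Markov_inequality_measure[OF mb(1), of "space M"]) (use eps v0 in auto)
  also have "\<dots> \<le> ((1 / s0)^4 * (Ks + 2 * Gs^2) / (2 * \<eta> * \<epsilon> * V^2) + 2 * (1 / s0)^2 * Gs / (\<epsilon> * V)) * (1 / (real n * d^2)) + \<eta> / (2 * \<epsilon>)"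
  proof (rule final_arith)
    show "0 < d" "d \<le> 1" using d by auto
    show "1 \<le> real n" using n by simp
    show "0 < V" by (rule V)
    show "V / d \<le> v" by (rule vlow)
    show "0 \<le> (\<Sum>j. \<bar>b j\<bar>)" using bs by (intro suminf_nonneg) auto
    show "(\<Sum>j. \<bar>b j\<bar>) \<le> (1 / s0) / d" using cp(3) unfolding s0_def by (simp add: field_simps)
    show "0 \<le> Ks + 2 * Gs^2" by (rule D0)
    show "0 \<le> Gs" by (rule Gs0)
    show "0 < \<eta>" by (rule eta)
    show "0 < \<epsilon>" by (rule eps)
    show "integral\<^sup>L M (\<lambda>\<omega>. \<bar>?S \<omega> - v\<bar>) \<le> (\<Sum>j. \<bar>b j\<bar>)^4 * (Ks + 2 * Gs^2) / (2 * (\<eta> * v) * real n) + \<eta> * v / 2 + 2 * (\<Sum>j. \<bar>b j\<bar>)^2 * Gs / real n"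
      using mb(2) unfolding a_def .
  qed
  finally show ?thesis unfolding V_def s0_def cL_def .
qed

end

lemma delta_asym:
  fixes \<delta> :: "nat \<Rightarrow> real" and \<alpha> :: real
  assumes pos: "\<And>n. 0 < \<delta> n" and al: "0 < \<alpha>" "\<alpha> < 1/2"
    and th: "\<delta> \<in> \<Theta>(\<lambda>n. real n powr (- \<alpha>))"
  shows "\<delta> \<longlonglongrightarrow> 0" and "(\<lambda>n. 1 / (real n * (\<delta> n)^2)) \<longlonglongrightarrow> 0"
proof -
  from th obtain c1 c2 :: real where c: "c1 > 0" "c2 > 0"
    and ev: "\<forall>\<^sub>F n in at_top. norm (\<delta> n) \<le> c1 * norm (real n powr (- \<alpha>))"
            "\<forall>\<^sub>F n in at_top. c2 * norm (real n powr (- \<alpha>)) \<le> norm (\<delta> n)"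
    unfolding bigtheta_def by (elim landau_o.bigE landau_omega.bigE IntE)
  have p0: "(\<lambda>n. real n powr (- \<alpha>)) \<longlonglongrightarrow> 0"
    using al by (intro tendsto_neg_powr filterlim_real_sequentially) auto
  show "\<delta> \<longlonglongrightarrow> 0"
  proof (rule tendsto_sandwich[of "\<lambda>_. 0" _ _ "\<lambda>n. c1 * real n powr (- \<alpha>)"])
    show "\<forall>\<^sub>F n in sequentially. 0 \<le> \<delta> n" using pos by (simp add: less_imp_le)
    show "\<forall>\<^sub>F n in sequentially. \<delta> n \<le> c1 * real n powr (- \<alpha>)"
      using ev(1) by eventually_elim (simp add: abs_of_pos pos)
    show "(\<lambda>n. c1 * real n powr (- \<alpha>)) \<longlonglongrightarrow> 0" using tendsto_mult_right_zero[OF p0, of c1] .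
  qed simp
  have p1: "(\<lambda>n. real n powr (2 * \<alpha> - 1)) \<longlonglongrightarrow> 0"
    using al by (intro tendsto_neg_powr filterlim_real_sequentially) auto
  show "(\<lambda>n. 1 / (real n * (\<delta> n)^2)) \<longlonglongrightarrow> 0"
  proof (rule tendsto_sandwich[of "\<lambda>_. 0" _ _ "\<lambda>n. (1 / c2^2) * real n powr (2 * \<alpha> - 1)"])
    show "\<forall>\<^sub>F n in sequentially. 0 \<le> 1 / (real n * (\<delta> n)^2)" by simp
    have "\<forall>\<^sub>F n in sequentially. n \<ge> 1" by (rule eventually_ge_at_top)
    then show "\<forall>\<^sub>F n in sequentially. 1 / (real n * (\<delta> n)^2) \<le> (1 / c2^2) * real n powr (2 * \<alpha> - 1)"
      using ev(2)
    proof eventually_elim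
      case (elim n)
      have n0: "0 < real n" using elim by simp
      have "c2 * real n powr (- \<alpha>) \<le> \<delta> n" using elim pos[of n] by (simp add: abs_of_pos)
      then have "(c2 * real n powr (- \<alpha>))^2 \<le> (\<delta> n)^2" using c by (intro power_mono) auto
      moreover have "(c2 * real n powr (- \<alpha>))^2 = c2^2 * real n powr (- 2 * \<alpha>)"
      proof -
        have "(c2 * real n powr (- \<alpha>))^2 = c2^2 * real n powr (of_nat 2 * - \<alpha>)"
          using n0 by (simp only: power_mult_distrib powr_power[of "real n"])
        also have "of_nat 2 * - \<alpha> = - 2 * \<alpha>" by simp
        finally show ?thesis .
      qed
      ultimately have "c2^2 * real n powr (- 2 * \<alpha>) \<le> (\<delta> n)^2" by simp
      then have "real n * (c2^2 * real n powr (- 2 * \<alpha>)) \<le> real n * (\<delta> n)^2" using n0 by simp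
      moreover have "real n * (c2^2 * real n powr (- 2 * \<alpha>)) = c2^2 * real n powr (1 - 2 * \<alpha>)"
      proof -
        have "real n * real n powr (- 2 * \<alpha>) = real n powr (1 + - 2 * \<alpha>)" by (rule powr_mult_base) simp
        then show ?thesis by (simp add: mult.left_commute)
      qed
      ultimately have le: "c2^2 * real n powr (1 - 2 * \<alpha>) \<le> real n * (\<delta> n)^2" by linarith
      have pos1: "0 < c2^2 * real n powr (1 - 2 * \<alpha>)" using c n0 by simp
      have "1 / (real n * (\<delta> n)^2) \<le> 1 / (c2^2 * real n powr (1 - 2 * \<alpha>))"
        by (rule divide_left_mono[OF le]) (use pos1 le in auto)
      also have "\<dots> = (1 / c2^2) * real n powr (2 * \<alpha> - 1)"
      proof -
        have "real n powr (2 * \<alpha> - 1) = 1 / real n powr (1 - 2 * \<alpha>)"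
          using powr_minus_divide[of "real n" "1 - 2 * \<alpha>"] by simp
        then show ?thesis by simp
      qed
      finally show ?case .
    qed
    show "(\<lambda>n. (1 / c2^2) * real n powr (2 * \<alpha> - 1)) \<longlonglongrightarrow> 0" using tendsto_mult_right_zero[OF p1] .
  qed simp
qed

theorem lemma5:
  fixes M :: "'a measure" and U :: "int \<Rightarrow> 'a \<Rightarrow> real"
    and \<gamma>U :: "int \<Rightarrow> real" and fU :: "real \<Rightarrow> real"
    and lam0 \<alpha> :: real and \<delta> :: "nat \<Rightarrow> real"
  assumes "prob_space M"
    and lam0: "0 < lam0" "lam0 < pi"
    and meas: "\<And>t. U t \<in> borel_measurable M"
    and mom4: "\<And>t. integrable M (\<lambda>\<omega>. (U t \<omega>) ^ 4)"
    and mean0: "\<And>t. integral\<^sup>L M (U t) = 0"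
    and cov: "\<And>t h. integral\<^sup>L M (\<lambda>\<omega>. U t \<omega> * U (t + h) \<omega>) = \<gamma>U h"
    and spec_nonneg: "\<And>lam. lam \<in> {-pi..pi} \<Longrightarrow> fU lam \<ge> 0"
    and spec_even: "\<And>lam. fU (- lam) = fU lam"
    and spec: "\<And>h. ((\<lambda>lam. exp (\<i> * complex_of_real (real_of_int h * lam)) * complex_of_real (fU lam))
                    has_integral complex_of_real (\<gamma>U h)) {-pi..pi}"
    and spec_cont: "continuous_on {0..pi} fU"
    and spec_pos: "(INF lam\<in>{0..pi}. fU lam) > 0"
    and cum_stat: "\<And>t h1 h2 h3. cum4 M (U t) (U (t + h1)) (U (t + h2)) (U (t + h3))
                                 = cum4 M (U 0) (U h1) (U h2) (U h3)"
    and cov_sum: "(\<lambda>h. \<bar>real_of_int h\<bar> * \<bar>\<gamma>U h\<bar>) summable_on (UNIV :: int set)"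
    and cum_sum: "(\<lambda>(h1, h2, h3). (1 + \<bar>real_of_int h1\<bar> + \<bar>real_of_int h2\<bar> + \<bar>real_of_int h3\<bar>)
                     * \<bar>cum4 M (U 0) (U h1) (U h2) (U h3)\<bar>) summable_on (UNIV :: (int \<times> int \<times> int) set)"
    and delta_range: "\<And>n. 0 < \<delta> n \<and> \<delta> n < 1"
    and alpha: "0 < \<alpha>" "\<alpha> < 1/3"
    and delta_order: "\<delta> \<in> \<Theta>(\<lambda>n. real n powr (- \<alpha>))"
  shows "\<forall>\<epsilon>>0. (\<lambda>n. measure M {\<omega> \<in> space M.
            \<bar>gamma_hat n (\<lambda>t. filtered lam0 (\<delta> n) U t \<omega>)
              / prob_space.variance M (filtered lam0 (\<delta> n) U 1) - 1\<bar> > \<epsilon>})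
         \<longlonglongrightarrow> 0"
proof -
  interpret Uproc M U \<gamma>U
    using \<open>prob_space M\<close> meas mom4 mean0 cov cum_stat by (simp add: Uproc_def Uproc_axioms_def)
  define m where "m = (INF lam\<in>{0..pi}. fU lam)"
  have m0: "0 < m" using spec_pos unfolding m_def .
  have bdd: "bdd_below (fU ` {0..pi})"
    using compact_continuous_image[OF spec_cont compact_Icc] by (intro bounded_imp_bdd_below compact_imp_bounded)
  have fmin: "m \<le> fU lam" if "lam \<in> {-pi..pi}" for lam
  proof (cases "lam \<ge> 0")
    case True
    then show ?thesis unfolding m_def using that by (intro cINF_lower[OF bdd]) auto
  next
    case False
    have "m \<le> fU (- lam)" unfolding m_def using that False by (intro cINF_lower[OF bdd]) auto
    then show ?thesis using spec_even[of lam] by simp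
  qed
  define Gs where "Gs = infsum (\<lambda>h. \<bar>\<gamma>U h\<bar>) UNIV"
  have gmax: "\<And>h. \<bar>\<gamma>U h\<bar> \<le> Gs" unfolding Gs_def by (rule gsum_facts(2)[OF cov_sum])
  have gsum: "\<And>c n. (\<Sum>t\<in>{1..int n}. \<bar>\<gamma>U (t + c)\<bar>) \<le> Gs" unfolding Gs_def by (rule gsum_facts(3)[OF cov_sum])
  define Ks where "Ks = infsum (\<lambda>(h1, h2, h3). \<bar>kap h1 h2 h3\<bar>) UNIV"
  have cs': "(\<lambda>(h1, h2, h3). (1 + \<bar>real_of_int h1\<bar> + \<bar>real_of_int h2\<bar> + \<bar>real_of_int h3\<bar>) * \<bar>kap h1 h2 h3\<bar>) summable_on UNIV"
    using cum_sum by (simp add: kap_def)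
  have ksum: "\<And>h c2 c3 n. (\<Sum>t\<in>{1..int n}. \<bar>kap h (t + c2) (t + c3)\<bar>) \<le> Ks"
    unfolding Ks_def by (rule ksum_facts[OF cs'])
  have dpos: "\<And>n. 0 < \<delta> n" using delta_range by blast
  have al2: "\<alpha> < 1/2" using alpha by simp
  note asy = delta_asym[OF dpos alpha(1) al2 delta_order]
  define V where "V = 2 * pi * m * (1 - \<bar>cos lam0\<bar>) / (32 * (sin lam0)^2)"
  show ?thesis
  proof (intro allI impI)
    fix \<epsilon> :: real assume eps: "\<epsilon> > 0"
    let ?P = "\<lambda>n. measure M {\<omega> \<in> space M.
            \<bar>gamma_hat n (\<lambda>t. filtered lam0 (\<delta> n) U t \<omega>)
              / prob_space.variance M (filtered lam0 (\<delta> n) U 1) - 1\<bar> > \<epsilon>}"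
    show "?P \<longlonglongrightarrow> 0"
    proof (rule order_tendstoI)
      fix a :: real assume "a < 0"
      then show "\<forall>\<^sub>F n in sequentially. a < ?P n" by (intro always_eventually allI) (simp add: less_le_trans)
    next
      fix e :: real assume e: "0 < e"
      define \<eta> where "\<eta> = e * \<epsilon>"
      have eta: "0 < \<eta>" unfolding \<eta>_def using e eps by simp
      define C where "C = (1 / sin lam0)^4 * (Ks + 2 * Gs^2) / (2 * \<eta> * \<epsilon> * V^2) + 2 * (1 / sin lam0)^2 * Gs / (\<epsilon> * V)"
      have "(\<lambda>n. C * (1 / (real n * (\<delta> n)^2))) \<longlonglongrightarrow> 0" by (rule tendsto_mult_right_zero[OF asy(2)])
      then have ev1: "\<forall>\<^sub>F n in sequentially. C * (1 / (real n * (\<delta> n)^2)) < e / 2"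
        using e by (intro order_tendstoD(2)) auto
      have ev2: "\<forall>\<^sub>F n in sequentially. \<delta> n < 1/2" using asy(1) by (intro order_tendstoD(2)) auto
      have ev3: "\<forall>\<^sub>F n in sequentially. n \<ge> 1" by (rule eventually_ge_at_top)
      show "\<forall>\<^sub>F n in sequentially. ?P n < e"
        using ev1 ev2 ev3
      proof eventually_elim
        case (elim n)
        have "?P n \<le> C * (1 / (real n * (\<delta> n)^2)) + \<eta> / (2 * \<epsilon>)"
          unfolding C_def V_def
          by (rule per_n_bound[OF lam0 dpos[of n] _ elim(3) spec fmin m0 gmax gsum ksum eps eta])
             (use elim(2) in auto)
        also have "\<eta> / (2 * \<epsilon>) = e / 2" unfolding \<eta>_def using eps by simp
        finally show ?case using elim(1) by linarith
      qed
    qed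
  qed
qed

end
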